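(* Let $q$ be a non-negative integer and $\Lambda$ a unital commutative ring which is $q$-torsion-free. A Lie algebra $\mathfrak g$ over $\Lambda$ is strongly $q$-capable if and only if $Z^{\curlywedge}_q(\mathfrak g)=\{0\}$.
   Context: All Lie algebras are over $\Lambda$. $Z(\mathfrak m)$ is the center of $\mathfrak m$ and $Z_q(\mathfrak m)=\{e\in Z(\mathfrak m)\mid qe=0\}$. A Lie algebra $\mathfrak g$ is strongly $q$-capable if there exists a Lie algebra $\mathfrak m$ with $Z(\mathfrak m)=Z_q(\mathfrak m)$ and $\mathfrak g\cong\mathfrak m/Z(\mathfrak m)$. Non-abelian $q$-exterior square: for $q\ge1$, $\mathfrak g\wedge^q\mathfrak g$ is the Lie algebra generated by symbols $h\wedge g$ and $\{h\}$ ($h,g\in\mathfrak g$) subject to, for all $h,h',g,g'\in\mathfrak g$, $\lambda,\lambda'\in\Lambda$: (1) $\lambda(h\wedge g)=\lambda h\wedge g=h\wedge\lambda g$; (2),(3) bilinearity in each variable; (4) $[h,h']\wedge g=h\wedge[h',g]-h'\wedge[h,g]$; (5) $h\wedge[g,g']=[g',h]\wedge g-[g,h]\wedge g'$; (6) $[h\wedge g,h'\wedge g']=[h,g]\wedge[h',g']$; (7) $[\{h'\},h\wedge g]=[qh',h]\wedge g+h\wedge[qh',g]$; (8) $\{\lambda h+\lambda'h'\}=\lambda\{h\}+\lambda'\{h'\}$; (9) $[\{h\},\{h'\}]=qh\wedge qh'$; (10) $\{[h,g]\}=q(h\wedge g)$; (11) $h\wedge h=0$. For $q=0$ it is generated by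 the $h\wedge g$ subject to (1)–(6) and (11) (Ellis's non-abelian exterior square). The $q$-exterior center in the sense of Ellis is $Z^{\curlywedge}_q(\mathfrak g)=\{g\in\mathfrak g\mid g\wedge x=0 \text{ in } \mathfrak g\wedge^q\mathfrak g \text{ for all } x\in\mathfrak g\}$. *)

theory Defs
  imports Main
begin

record ('a, 'r) lie_alg =
  lcarrier :: "'a set"
  ladd  :: "'a \<Rightarrow> 'a \<Rightarrow> 'a"
  lzero :: "'a"
  lneg  :: "'a \<Rightarrow> 'a"
  lsmul :: "'r \<Rightarrow> 'a \<Rightarrow> 'a"
  lbr   :: "'a \<Rightarrow> 'a \<Rightarrow> 'a"

definition lie_algebra :: "('a, 'r::comm_ring_1) lie_alg \<Rightarrow> bool" where
  "lie_algebra L \<longleftrightarrow>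
     (let C = lcarrier L; add = ladd L; z = lzero L; neg = lneg L; sm = lsmul L; br = lbr L in
       z \<in> C
     \<and> (\<forall>x\<in>C. \<forall>y\<in>C. add x y \<in> C)
     \<and> (\<forall>x\<in>C. neg x \<in> C)
     \<and> (\<forall>r x. x \<in> C \<longrightarrow> sm r x \<in> C)
     \<and> (\<forall>x\<in>C. \<forall>y\<in>C. br x y \<in> C)
     \<and> (\<forall>x\<in>C. \<forall>y\<in>C. \<forall>w\<in>C. add (add x y) w = add x (add y w))
     \<and> (\<forall>x\<in>C. \<forall>y\<in>C. add x y = add y x)
     \<and> (\<forall>x\<in>C. add x z = x)
     \<and> (\<forall>x\<in>C. add x (neg x) = z)
     \<and> (\<forall>r x y. x \<in> C \<longrightarrow> y \<in> C \<longrightarrow> sm r (add x y) = add (sm r x) (sm r y))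
     \<and> (\<forall>r s x. x \<in> C \<longrightarrow> sm (r + s) x = add (sm r x) (sm s x))
     \<and> (\<forall>r s x. x \<in> C \<longrightarrow> sm r (sm s x) = sm (r * s) x)
     \<and> (\<forall>x\<in>C. sm 1 x = x)
     \<and> (\<forall>x\<in>C. \<forall>y\<in>C. \<forall>w\<in>C. br (add x y) w = add (br x w) (br y w))
     \<and> (\<forall>x\<in>C. \<forall>y\<in>C. \<forall>w\<in>C. br x (add y w) = add (br x y) (br x w))
     \<and> (\<forall>r x y. x \<in> C \<longrightarrow> y \<in> C \<longrightarrow> br (sm r x) y = sm r (br x y))
     \<and> (\<forall>r x y. x \<in> C \<longrightarrow> y \<in> C \<longrightarrow> br x (sm r y) = sm r (br x y))
     \<and> (\<forall>x\<in>C. br x x = z)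
     \<and> (\<forall>x\<in>C. \<forall>y\<in>C. \<forall>w\<in>C.
          add (br x (br y w)) (add (br y (br w x)) (br w (br x y))) = z))"

definition lie_hom :: "('a \<Rightarrow> 'b) \<Rightarrow> ('a, 'r) lie_alg \<Rightarrow> ('b, 'r) lie_alg \<Rightarrow> bool" where
  "lie_hom f L M \<longleftrightarrow>
     (\<forall>x\<in>lcarrier L. f x \<in> lcarrier M)
   \<and> (\<forall>x\<in>lcarrier L. \<forall>y\<in>lcarrier L. f (ladd L x y) = ladd M (f x) (f y))
   \<and> (\<forall>r. \<forall>x\<in>lcarrier L. f (lsmul L r x) = lsmul M r (f x))
   \<and> (\<forall>x\<in>lcarrier L. \<forall>y\<in>lcarrier L. f (lbr L x y) = lbr M (f x) (f y))"

definition lie_iso :: "('a \<Rightarrow> 'b) \<Rightarrow> ('a, 'r) lie_alg \<Rightarrow> ('b, 'r) lie_alg \<Rightarrow> bool" where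
  "lie_iso f L M \<longleftrightarrow> lie_hom f L M \<and> bij_betw f (lcarrier L) (lcarrier M)"

definition lie_center :: "('a, 'r) lie_alg \<Rightarrow> 'a set" where
  "lie_center L = {e \<in> lcarrier L. \<forall>x\<in>lcarrier L. lbr L e x = lzero L}"

definition lie_center_q :: "nat \<Rightarrow> ('a, 'r::comm_ring_1) lie_alg \<Rightarrow> 'a set" where
  "lie_center_q q L = {e \<in> lie_center L. lsmul L (of_nat q) e = lzero L}"

definition quot_center :: "('a, 'r) lie_alg \<Rightarrow> ('a set, 'r) lie_alg" where
  "quot_center L =
     (let Z = lie_center L in
      \<lparr> lcarrier = (\<lambda>x. {ladd L x z | z. z \<in> Z}) ` lcarrier L,
        ladd = (\<lambda>A B. {ladd L a b | a b. a \<in> A \<and> b \<in> B}),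
        lzero = Z,
        lneg = (\<lambda>A. lneg L ` A),
        lsmul = (\<lambda>r A. {ladd L (lsmul L r a) z | a z. a \<in> A \<and> z \<in> Z}),
        lbr = (\<lambda>A B. {ladd L (lbr L a b) z | a b z. a \<in> A \<and> b \<in> B \<and> z \<in> Z}) \<rparr>)"

text \<open>HOL cannot quantify over types inside a formula, so the ambient Lie algebra m
  is taken on an arbitrary carrier set inside a type 'm, given as a parameter.\<close>

definition strongly_q_capable ::
  "nat \<Rightarrow> ('a, 'r::comm_ring_1) lie_alg \<Rightarrow> 'm itself \<Rightarrow> bool" where
  "strongly_q_capable q g (_ :: 'm itself) \<longleftrightarrow>
     (\<exists>(m :: ('m, 'r) lie_alg) f. lie_algebra m \<and> lie_center m = lie_center_q q m
          \<and> lie_iso f g (quot_center m))"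

definition q_torsion_free :: "nat \<Rightarrow> 'r::comm_ring_1 itself \<Rightarrow> bool" where
  "q_torsion_free q (_ :: 'r itself) \<longleftrightarrow>
     (0 < q \<longrightarrow> (\<forall>r::'r. of_nat q * r = 0 \<longrightarrow> r = 0))"

datatype 'a xgen = XWedge 'a 'a | XBrace 'a

datatype ('x, 'r) fterm =
    FGen 'x
  | FZero
  | FAdd "('x, 'r) fterm" "('x, 'r) fterm"
  | FNeg "('x, 'r) fterm"
  | FSmul 'r "('x, 'r) fterm"
  | FBr "('x, 'r) fterm" "('x, 'r) fterm"

text \<open>For q = 0 the generators {h}
  are killed, so that the quotient is Ellis's non-abelian exterior square.\<close>

inductive qext_eq :: "nat \<Rightarrow> ('a, 'r::comm_ring_1) lie_alg
    \<Rightarrow> ('a xgen, 'r) fterm \<Rightarrow> ('a xgen, 'r) fterm \<Rightarrow> bool"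
  for q :: nat and g :: "('a, 'r) lie_alg" where
  refl: "qext_eq q g x x"
| sym: "qext_eq q g x y \<Longrightarrow> qext_eq q g y x"
| trans: "qext_eq q g x y \<Longrightarrow> qext_eq q g y z \<Longrightarrow> qext_eq q g x z"
| cong_add: "qext_eq q g x x' \<Longrightarrow> qext_eq q g y y' \<Longrightarrow> qext_eq q g (FAdd x y) (FAdd x' y')"
| cong_neg: "qext_eq q g x x' \<Longrightarrow> qext_eq q g (FNeg x) (FNeg x')"
| cong_smul: "qext_eq q g x x' \<Longrightarrow> qext_eq q g (FSmul r x) (FSmul r x')"
| cong_br: "qext_eq q g x x' \<Longrightarrow> qext_eq q g y y' \<Longrightarrow> qext_eq q g (FBr x y) (FBr x' y')"
| add_assoc: "qext_eq q g (FAdd (FAdd x y) z) (FAdd x (FAdd y z))"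
| add_comm: "qext_eq q g (FAdd x y) (FAdd y x)"
| add_zero: "qext_eq q g (FAdd x FZero) x"
| add_neg: "qext_eq q g (FAdd x (FNeg x)) FZero"
| smul_add: "qext_eq q g (FSmul r (FAdd x y)) (FAdd (FSmul r x) (FSmul r y))"
| add_smul: "qext_eq q g (FSmul (r + s) x) (FAdd (FSmul r x) (FSmul s x))"
| smul_smul: "qext_eq q g (FSmul r (FSmul s x)) (FSmul (r * s) x)"
| one_smul: "qext_eq q g (FSmul 1 x) x"
| br_add_left: "qext_eq q g (FBr (FAdd x y) z) (FAdd (FBr x z) (FBr y z))"
| br_add_right: "qext_eq q g (FBr x (FAdd y z)) (FAdd (FBr x y) (FBr x z))"
| br_smul_left: "qext_eq q g (FBr (FSmul r x) y) (FSmul r (FBr x y))"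
| br_smul_right: "qext_eq q g (FBr x (FSmul r y)) (FSmul r (FBr x y))"
| br_self: "qext_eq q g (FBr x x) FZero"
| jacobi: "qext_eq q g (FAdd (FBr x (FBr y z)) (FAdd (FBr y (FBr z x)) (FBr z (FBr x y)))) FZero"
| rel1a: "h \<in> lcarrier g \<Longrightarrow> k \<in> lcarrier g \<Longrightarrow>
     qext_eq q g (FSmul r (FGen (XWedge h k))) (FGen (XWedge (lsmul g r h) k))"
| rel1b: "h \<in> lcarrier g \<Longrightarrow> k \<in> lcarrier g \<Longrightarrow>
     qext_eq q g (FSmul r (FGen (XWedge h k))) (FGen (XWedge h (lsmul g r k)))"
| rel2: "h \<in> lcarrier g \<Longrightarrow> h' \<in> lcarrier g \<Longrightarrow> k \<in> lcarrier g \<Longrightarrow>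
     qext_eq q g (FGen (XWedge (ladd g h h') k)) (FAdd (FGen (XWedge h k)) (FGen (XWedge h' k)))"
| rel3: "h \<in> lcarrier g \<Longrightarrow> k \<in> lcarrier g \<Longrightarrow> k' \<in> lcarrier g \<Longrightarrow>
     qext_eq q g (FGen (XWedge h (ladd g k k'))) (FAdd (FGen (XWedge h k)) (FGen (XWedge h k')))"
| rel4: "h \<in> lcarrier g \<Longrightarrow> h' \<in> lcarrier g \<Longrightarrow> k \<in> lcarrier g \<Longrightarrow>
     qext_eq q g (FGen (XWedge (lbr g h h') k))
       (FAdd (FGen (XWedge h (lbr g h' k))) (FNeg (FGen (XWedge h' (lbr g h k)))))"
| rel5: "h \<in> lcarrier g \<Longrightarrow> k \<in> lcarrier g \<Longrightarrow> k' \<in> lcarrier g \<Longrightarrow>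
     qext_eq q g (FGen (XWedge h (lbr g k k')))
       (FAdd (FGen (XWedge (lbr g k' h) k)) (FNeg (FGen (XWedge (lbr g k h) k'))))"
| rel6: "h \<in> lcarrier g \<Longrightarrow> k \<in> lcarrier g \<Longrightarrow> h' \<in> lcarrier g \<Longrightarrow> k' \<in> lcarrier g \<Longrightarrow>
     qext_eq q g (FBr (FGen (XWedge h k)) (FGen (XWedge h' k')))
       (FGen (XWedge (lbr g h k) (lbr g h' k')))"
| rel7: "h \<in> lcarrier g \<Longrightarrow> h' \<in> lcarrier g \<Longrightarrow> k \<in> lcarrier g \<Longrightarrow>
     qext_eq q g (FBr (FGen (XBrace h')) (FGen (XWedge h k)))
       (FAdd (FGen (XWedge (lbr g (lsmul g (of_nat q) h') h) k))
             (FGen (XWedge h (lbr g (lsmul g (of_nat q) h') k))))"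
| rel8: "h \<in> lcarrier g \<Longrightarrow> h' \<in> lcarrier g \<Longrightarrow>
     qext_eq q g (FGen (XBrace (ladd g (lsmul g r h) (lsmul g r' h'))))
       (FAdd (FSmul r (FGen (XBrace h))) (FSmul r' (FGen (XBrace h'))))"
| rel9: "h \<in> lcarrier g \<Longrightarrow> h' \<in> lcarrier g \<Longrightarrow>
     qext_eq q g (FBr (FGen (XBrace h)) (FGen (XBrace h')))
       (FGen (XWedge (lsmul g (of_nat q) h) (lsmul g (of_nat q) h')))"
| rel10: "h \<in> lcarrier g \<Longrightarrow> k \<in> lcarrier g \<Longrightarrow>
     qext_eq q g (FGen (XBrace (lbr g h k))) (FSmul (of_nat q) (FGen (XWedge h k)))"
| rel11: "h \<in> lcarrier g \<Longrightarrow> qext_eq q g (FGen (XWedge h h)) FZero"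
| rel_q0: "q = 0 \<Longrightarrow> h \<in> lcarrier g \<Longrightarrow> qext_eq q g (FGen (XBrace h)) FZero"

definition ext_center_q :: "nat \<Rightarrow> ('a, 'r::comm_ring_1) lie_alg \<Rightarrow> 'a set" where
  "ext_center_q q g =
     {x \<in> lcarrier g. \<forall>y\<in>lcarrier g. qext_eq q g (FGen (XWedge x y)) FZero}"

end

theory Submission
  imports Defs
begin

locale amod =
  fixes C :: "'a set" and eq :: "'a \<Rightarrow> 'a \<Rightarrow> bool" (infix "\<doteq>" 50)
    and add :: "'a \<Rightarrow> 'a \<Rightarrow> 'a" and zero :: 'a and neg :: "'a \<Rightarrow> 'a"
    and sm :: "'r::comm_ring_1 \<Rightarrow> 'a \<Rightarrow> 'a"
  assumes C_zero[simp]: "zero \<in> C"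
    and C_add[simp]: "x \<in> C \<Longrightarrow> y \<in> C \<Longrightarrow> add x y \<in> C"
    and C_neg[simp]: "x \<in> C \<Longrightarrow> neg x \<in> C"
    and C_sm[simp]: "x \<in> C \<Longrightarrow> sm r x \<in> C"
    and e_refl[simp]: "x \<doteq> x"
    and e_sym: "x \<doteq> y \<Longrightarrow> y \<doteq> x"
    and e_trans[trans]: "x \<doteq> y \<Longrightarrow> y \<doteq> w \<Longrightarrow> x \<doteq> w"
    and e_add: "x \<doteq> x' \<Longrightarrow> y \<doteq> y' \<Longrightarrow> add x y \<doteq> add x' y'"
    and e_neg: "x \<doteq> x' \<Longrightarrow> neg x \<doteq> neg x'"
    and e_sm: "x \<doteq> x' \<Longrightarrow> sm r x \<doteq> sm r x'"
    and a_assoc: "x \<in> C \<Longrightarrow> y \<in> C \<Longrightarrow> w \<in> C \<Longrightarrow> add (add x y) w \<doteq> add x (add y w)"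
    and a_comm: "x \<in> C \<Longrightarrow> y \<in> C \<Longrightarrow> add x y \<doteq> add y x"
    and a_zero: "x \<in> C \<Longrightarrow> add x zero \<doteq> x"
    and a_neg: "x \<in> C \<Longrightarrow> add x (neg x) \<doteq> zero"
    and s_add: "x \<in> C \<Longrightarrow> y \<in> C \<Longrightarrow> sm r (add x y) \<doteq> add (sm r x) (sm r y)"
    and s_distr: "x \<in> C \<Longrightarrow> sm (r + s) x \<doteq> add (sm r x) (sm s x)"
    and s_ss: "x \<in> C \<Longrightarrow> sm r (sm s x) \<doteq> sm (r * s) x"
    and s_one: "x \<in> C \<Longrightarrow> sm 1 x \<doteq> x"
begin

lemma e_addl: "x \<doteq> x' \<Longrightarrow> add x y \<doteq> add x' y" by (rule e_add) auto
lemma e_addr: "y \<doteq> y' \<Longrightarrow> add x y \<doteq> add x y'" by (rule e_add) auto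

lemma zero_add: "x \<in> C \<Longrightarrow> add zero x \<doteq> x"
  using a_comm a_zero e_trans by (meson C_zero)

lemma neg_add_self: "x \<in> C \<Longrightarrow> add (neg x) x \<doteq> zero"
  using a_comm a_neg e_trans by (meson C_neg)

lemma cancel:
  assumes x: "x \<in> C" and y: "y \<in> C" and w: "w \<in> C" and h: "add x y \<doteq> add x w"
  shows "y \<doteq> w"
proof -
  have "y \<doteq> add zero y" using zero_add[OF y] by (rule e_sym)
  also have "\<dots> \<doteq> add (add (neg x) x) y" by (rule e_addl, rule e_sym, rule neg_add_self[OF x])
  also have "\<dots> \<doteq> add (neg x) (add x y)" using a_assoc x y by simp
  also have "\<dots> \<doteq> add (neg x) (add x w)" using h by (rule e_addr)
  also have "\<dots> \<doteq> add (add (neg x) x) w" using a_assoc[OF C_neg[OF x] x w] by (rule e_sym)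
  also have "\<dots> \<doteq> add zero w" by (rule e_addl, rule neg_add_self[OF x])
  also have "\<dots> \<doteq> w" using zero_add[OF w] .
  finally show ?thesis .
qed

lemma idem_zero: assumes x: "x \<in> C" and h: "add x x \<doteq> x" shows "x \<doteq> zero"
proof -
  have "add x x \<doteq> add x zero" using h e_sym[OF a_zero[OF x]] by (rule e_trans)
  then show ?thesis using cancel[OF x x C_zero] by simp
qed

lemma neg_unique: assumes x: "x \<in> C" and y: "y \<in> C" and h: "add x y \<doteq> zero" shows "y \<doteq> neg x"
proof -
  have "add x y \<doteq> add x (neg x)" using h e_sym[OF a_neg[OF x]] by (rule e_trans)
  then show ?thesis using cancel[OF x y C_neg[OF x]] by simp
qed

lemma zero_sm: assumes x: "x \<in> C" shows "sm 0 x \<doteq> zero"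
proof -
  have "add (sm 0 x) (sm 0 x) \<doteq> sm 0 x" using s_distr[OF x, of 0 0] by (auto intro: e_sym)
  then show ?thesis using idem_zero x by simp
qed

lemma sm_zero: "sm r zero \<doteq> zero"
proof -
  have "add (sm r zero) (sm r zero) \<doteq> sm r (add zero zero)" using s_add[of zero zero r] by (auto intro: e_sym)
  also have "\<dots> \<doteq> sm r zero" by (rule e_sm, rule a_zero) simp
  finally show ?thesis using idem_zero by simp
qed

lemma neg_sm: assumes x: "x \<in> C" shows "sm (- r) x \<doteq> neg (sm r x)"
proof -
  have "add (sm r x) (sm (- r) x) \<doteq> sm (r + - r) x" using s_distr[OF x] by (rule e_sym)
  also have "\<dots> \<doteq> zero" using zero_sm[OF x] by simp
  finally show ?thesis using neg_unique x by simp
qed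

lemma neg_zero: "neg zero \<doteq> zero"
  using neg_unique[OF C_zero C_zero] a_zero[OF C_zero] by (auto intro: e_sym)

lemma swap4: assumes "a \<in> C" "b \<in> C" "c \<in> C" "d \<in> C"
  shows "add (add a b) (add c d) \<doteq> add (add a c) (add b d)"
proof -
  have "add (add a b) (add c d) \<doteq> add a (add b (add c d))" using assms by (simp add: a_assoc)
  also have "\<dots> \<doteq> add a (add (add b c) d)" by (rule e_addr, rule e_sym, rule a_assoc) (use assms in auto)
  also have "\<dots> \<doteq> add a (add (add c b) d)" using assms by (intro e_addr e_addl a_comm)
  also have "\<dots> \<doteq> add a (add c (add b d))" using assms by (intro e_addr) (simp add: a_assoc)
  also have "\<dots> \<doteq> add (add a c) (add b d)" by (rule e_sym, rule a_assoc) (use assms in auto)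
  finally show ?thesis .
qed

lemma neg_add: assumes "x \<in> C" "y \<in> C" shows "neg (add x y) \<doteq> add (neg x) (neg y)"
proof -
  have "add (add x y) (add (neg x) (neg y)) \<doteq> add (add x (neg x)) (add y (neg y))"
    using assms by (simp add: swap4)
  also have "\<dots> \<doteq> add zero zero" using assms by (intro e_add a_neg)
  also have "\<dots> \<doteq> zero" by (simp add: a_zero)
  finally have h: "add (add x y) (add (neg x) (neg y)) \<doteq> zero" .
  show ?thesis by (rule e_sym[OF neg_unique[OF _ _ h]]) (use assms in auto)
qed

lemma neg_neg: assumes "x \<in> C" shows "neg (neg x) \<doteq> x"
  using neg_unique[OF C_neg[OF assms] assms] neg_add_self[OF assms] by (auto intro: e_sym)

lemma sub_zero_eq: assumes "x \<in> C" "y \<in> C" "add x (neg y) \<doteq> zero" shows "x \<doteq> y"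
proof -
  have "neg y \<doteq> neg x" using neg_unique assms by simp
  then have "neg (neg y) \<doteq> neg (neg x)" by (rule e_neg)
  then have "y \<doteq> neg (neg x)" using e_trans[OF e_sym[OF neg_neg[OF assms(2)]]] by blast
  then have "y \<doteq> x" using neg_neg[OF assms(1)] e_trans by blast
  then show ?thesis by (rule e_sym)
qed

end

locale alie = amod +
  fixes br :: "'a \<Rightarrow> 'a \<Rightarrow> 'a"
  assumes C_br[simp]: "x \<in> C \<Longrightarrow> y \<in> C \<Longrightarrow> br x y \<in> C"
    and e_br: "x \<doteq> x' \<Longrightarrow> y \<doteq> y' \<Longrightarrow> br x y \<doteq> br x' y'"
    and b_addl: "x \<in> C \<Longrightarrow> y \<in> C \<Longrightarrow> w \<in> C \<Longrightarrow> br (add x y) w \<doteq> add (br x w) (br y w)"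
    and b_addr: "x \<in> C \<Longrightarrow> y \<in> C \<Longrightarrow> w \<in> C \<Longrightarrow> br x (add y w) \<doteq> add (br x y) (br x w)"
    and b_sml: "x \<in> C \<Longrightarrow> y \<in> C \<Longrightarrow> br (sm r x) y \<doteq> sm r (br x y)"
    and b_smr: "x \<in> C \<Longrightarrow> y \<in> C \<Longrightarrow> br x (sm r y) \<doteq> sm r (br x y)"
    and b_self: "x \<in> C \<Longrightarrow> br x x \<doteq> zero"
    and b_jac: "x \<in> C \<Longrightarrow> y \<in> C \<Longrightarrow> w \<in> C \<Longrightarrow>
          add (br x (br y w)) (add (br y (br w x)) (br w (br x y))) \<doteq> zero"
begin

lemma br_zero_l: assumes "x \<in> C" shows "br zero x \<doteq> zero"
proof -
  have "add (br zero x) (br zero x) \<doteq> br (add zero zero) x" by (rule e_sym, rule b_addl) (use assms in auto)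
  also have "\<dots> \<doteq> br zero x" by (intro e_br a_zero) auto
  finally show ?thesis using idem_zero assms by simp
qed

lemma br_zero_r: assumes "x \<in> C" shows "br x zero \<doteq> zero"
proof -
  have "add (br x zero) (br x zero) \<doteq> br x (add zero zero)" by (rule e_sym, rule b_addr) (use assms in auto)
  also have "\<dots> \<doteq> br x zero" by (intro e_br a_zero) auto
  finally show ?thesis using idem_zero assms by simp
qed

lemma br_anti: assumes x: "x \<in> C" and y: "y \<in> C" shows "br y x \<doteq> neg (br x y)"
proof -
  have "zero \<doteq> br (add x y) (add x y)" by (rule e_sym, rule b_self) (use x y in auto)
  also have "\<dots> \<doteq> add (br x (add x y)) (br y (add x y))" using x y by (simp add: b_addl)
  also have "\<dots> \<doteq> add (add (br x x) (br x y)) (add (br y x) (br y y))"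
    using x y by (intro e_add b_addr) auto
  also have "\<dots> \<doteq> add (add zero (br x y)) (add (br y x) zero)"
    using x y by (intro e_add b_self e_refl)
  also have "\<dots> \<doteq> add (br x y) (br y x)" using x y by (intro e_add zero_add a_zero) auto
  finally show ?thesis using x y by (intro neg_unique) (auto intro: e_sym)
qed

lemma br_negl: assumes x: "x \<in> C" and y: "y \<in> C" shows "br (neg x) y \<doteq> neg (br x y)"
proof -
  have "add (br x y) (br (neg x) y) \<doteq> br (add x (neg x)) y" by (rule e_sym, rule b_addl) (use x y in auto)
  also have "\<dots> \<doteq> br zero y" using x by (intro e_br a_neg) auto
  also have "\<dots> \<doteq> zero" using br_zero_l y .
  finally show ?thesis using x y by (intro neg_unique) auto
qed

lemma br_negr: assumes x: "x \<in> C" and y: "y \<in> C" shows "br x (neg y) \<doteq> neg (br x y)"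
proof -
  have "add (br x y) (br x (neg y)) \<doteq> br x (add y (neg y))" by (rule e_sym, rule b_addr) (use x y in auto)
  also have "\<dots> \<doteq> br x zero" using y by (intro e_br a_neg) auto
  also have "\<dots> \<doteq> zero" using br_zero_r x .
  finally show ?thesis using x y by (intro neg_unique) auto
qed

end

lemma lie_algebra_alie:
  assumes "lie_algebra L"
  shows "alie (lcarrier L) (=) (ladd L) (lzero L) (lneg L) (lsmul L) (lbr L)"
  using assms unfolding lie_algebra_def Let_def
  apply (elim conjE)
  apply unfold_locales
  apply meson+
  done

abbreviation qe :: "nat \<Rightarrow> ('a, 'r::comm_ring_1) lie_alg \<Rightarrow> ('a xgen, 'r) fterm \<Rightarrow> ('a xgen, 'r) fterm \<Rightarrow> bool"
  where "qe q g \<equiv> qext_eq q g"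

lemma qe_amod: "amod UNIV (qext_eq q g) FAdd FZero FNeg FSmul"
  by unfold_locales (auto intro: qext_eq.intros)

interpretation E: amod UNIV "qext_eq q g" FAdd FZero FNeg FSmul for q g
  by (rule qe_amod)

fun lin :: "('x, 'r::comm_ring_1) fterm \<Rightarrow> ('x, 'r) fterm \<Rightarrow> 'r" where
  "lin (FGen x) = (\<lambda>s. if s = FGen x then 1 else 0)"
| "lin FZero = (\<lambda>s. 0)"
| "lin (FAdd a b) = (\<lambda>s. lin a s + lin b s)"
| "lin (FNeg a) = (\<lambda>s. - lin a s)"
| "lin (FSmul r a) = (\<lambda>s. r * lin a s)"
| "lin (FBr a b) = (\<lambda>s. if s = FBr a b then 1 else 0)"

fun atoms :: "('x, 'r) fterm \<Rightarrow> ('x, 'r) fterm set" where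
  "atoms (FGen x) = {FGen x}"
| "atoms FZero = {}"
| "atoms (FAdd a b) = atoms a \<union> atoms b"
| "atoms (FNeg a) = atoms a"
| "atoms (FSmul r a) = atoms a"
| "atoms (FBr a b) = {FBr a b}"

lemma finite_atoms: "finite (atoms a)"
  by (induction a) auto

fun canon :: "('x, 'r::comm_ring_1) fterm list \<Rightarrow> (('x, 'r) fterm \<Rightarrow> 'r) \<Rightarrow> ('x, 'r) fterm" where
  "canon [] f = FZero"
| "canon (t # ts) f = FAdd (FSmul (f t) t) (canon ts f)"

context fixes q :: nat and g :: "('a, 'r::comm_ring_1) lie_alg"
begin

lemma canon_cong: "(\<And>s. s \<in> set As \<Longrightarrow> f s = h s) \<Longrightarrow> canon As f = canon As h"
  by (induction As) auto

lemma canon_zero: "(\<And>s. s \<in> set As \<Longrightarrow> f s = 0) \<Longrightarrow> qe q g (canon As f) FZero"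
proof (induction As)
  case Nil then show ?case by simp
next
  case (Cons t ts)
  have "qe q g (FAdd (FSmul (f t) t) (canon ts f)) (FAdd FZero FZero)"
    using Cons by (intro E.e_add) (auto intro: E.zero_sm)
  also have "qe q g \<dots> FZero" by (rule E.a_zero) simp
  finally show ?case by simp
qed

lemma canon_atom: "t \<in> set As \<Longrightarrow> distinct As \<Longrightarrow>
    qe q g (canon As (\<lambda>s. if s = t then 1 else 0)) t"
proof (induction As)
  case Nil then show ?case by simp
next
  case (Cons a ts)
  show ?case
  proof (cases "a = t")
    case True
    then have "t \<notin> set ts" using Cons by auto
    then have z: "qe q g (canon ts (\<lambda>s. if s = t then 1 else 0)) FZero"
      by (intro canon_zero) auto
    have "qe q g (FAdd (FSmul 1 t) (canon ts (\<lambda>s. if s = t then 1 else 0))) (FAdd t FZero)"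
      by (intro E.e_add z E.s_one) simp
    also have "qe q g \<dots> t" by (rule E.a_zero) simp
    finally show ?thesis using True by simp
  next
    case False
    then have "qe q g (canon ts (\<lambda>s. if s = t then 1 else 0)) t" using Cons by auto
    then have "qe q g (FAdd (FSmul 0 a) (canon ts (\<lambda>s. if s = t then 1 else 0))) (FAdd FZero t)"
      by (intro E.e_add E.zero_sm) simp_all
    also have "qe q g \<dots> t" by (rule E.zero_add) simp
    finally show ?thesis using False by simp
  qed
qed

lemma canon_add: "qe q g (canon As (\<lambda>s. f s + h s)) (FAdd (canon As f) (canon As h))"
proof (induction As)
  case Nil then show ?case using E.e_sym[OF E.a_zero[of FZero]] by simp
next
  case (Cons t ts)
  have "qe q g (FAdd (FSmul (f t + h t) t) (canon ts (\<lambda>s. f s + h s)))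
           (FAdd (FAdd (FSmul (f t) t) (FSmul (h t) t)) (FAdd (canon ts f) (canon ts h)))"
    using Cons by (intro E.e_add E.s_distr) simp_all
  also have "qe q g \<dots> (FAdd (FAdd (FSmul (f t) t) (canon ts f)) (FAdd (FSmul (h t) t) (canon ts h)))"
    by (rule E.swap4) simp_all
  finally show ?case by simp
qed

lemma canon_neg: "qe q g (canon As (\<lambda>s. - f s)) (FNeg (canon As f))"
proof (induction As)
  case Nil then show ?case using E.e_sym[OF E.neg_zero] by simp
next
  case (Cons t ts)
  have "qe q g (FAdd (FSmul (- f t) t) (canon ts (\<lambda>s. - f s)))
           (FAdd (FNeg (FSmul (f t) t)) (FNeg (canon ts f)))"
    using Cons by (intro E.e_add E.neg_sm) simp_all
  also have "qe q g \<dots> (FNeg (FAdd (FSmul (f t) t) (canon ts f)))"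
    by (rule E.e_sym, rule E.neg_add) simp_all
  finally show ?case by simp
qed

lemma canon_smul: "qe q g (canon As (\<lambda>s. r * f s)) (FSmul r (canon As f))"
proof (induction As)
  case Nil then show ?case using E.e_sym[OF E.sm_zero] by simp
next
  case (Cons t ts)
  have "qe q g (FAdd (FSmul (r * f t) t) (canon ts (\<lambda>s. r * f s)))
           (FAdd (FSmul r (FSmul (f t) t)) (FSmul r (canon ts f)))"
    using Cons by (intro E.e_add E.e_sym[OF E.s_ss]) simp_all
  also have "qe q g \<dots> (FSmul r (FAdd (FSmul (f t) t) (canon ts f)))"
    by (rule E.e_sym, rule E.s_add) simp_all
  finally show ?case by simp
qed

lemma canon_rep: "atoms a \<subseteq> set As \<Longrightarrow> distinct As \<Longrightarrow> qe q g a (canon As (lin a))"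
proof (induction a)
  case (FGen x)
  then show ?case using E.e_sym[OF canon_atom[of "FGen x" As]] by simp
next
  case FZero
  then show ?case using E.e_sym[OF canon_zero[of As "\<lambda>s. 0"]] by simp
next
  case (FAdd a b)
  then have "qe q g (FAdd a b) (FAdd (canon As (lin a)) (canon As (lin b)))"
    by (intro E.e_add) auto
  also have "qe q g \<dots> (canon As (lin (FAdd a b)))"
    using E.e_sym[OF canon_add[of As "lin a" "lin b"]] by simp
  finally show ?case .
next
  case (FNeg a)
  then have "qe q g (FNeg a) (FNeg (canon As (lin a)))" by (intro E.e_neg) auto
  also have "qe q g \<dots> (canon As (lin (FNeg a)))"
    using E.e_sym[OF canon_neg[of As "lin a"]] by simp
  finally show ?case .
next
  case (FSmul r a)
  then have "qe q g (FSmul r a) (FSmul r (canon As (lin a)))" by (intro E.e_sm) auto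
  also have "qe q g \<dots> (canon As (lin (FSmul r a)))"
    using E.e_sym[OF canon_smul[of As r "lin a"]] by simp
  finally show ?case .
next
  case (FBr a b)
  then show ?case using E.e_sym[OF canon_atom[of "FBr a b" As]] by simp
qed

lemma lin_eq: assumes "lin a = lin b" shows "qe q g a b"
proof -
  obtain As where As: "set As = atoms a \<union> atoms b" "distinct As"
    using finite_distinct_list[of "atoms a \<union> atoms b"] finite_atoms by blast
  have "qe q g a (canon As (lin a))" using As by (intro canon_rep) auto
  also have "canon As (lin a) = canon As (lin b)" using assms by simp
  also have "qe q g \<dots> b" using As E.e_sym[OF canon_rep[of b As]] by simp
  finally show ?thesis .
qed

end

abbreviation W :: "'a \<Rightarrow> 'a \<Rightarrow> ('a xgen, 'r) fterm" where "W x y \<equiv> FGen (XWedge x y)"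
abbreviation Bz :: "'a \<Rightarrow> ('a xgen, 'r) fterm" where "Bz x \<equiv> FGen (XBrace x)"

locale qsetup =
  fixes q :: nat and g :: "('a, 'r::comm_ring_1) lie_alg"
  assumes LA: "lie_algebra g"
begin

sublocale G: alie "lcarrier g" "(=)" "ladd g" "lzero g" "lneg g" "lsmul g" "lbr g"
  by (rule lie_algebra_alie[OF LA])

abbreviation eqv (infix "\<approx>" 50) where "a \<approx> b \<equiv> qext_eq q g a b"

lemma e_trans'[trans]: "a \<approx> b \<Longrightarrow> b \<approx> c \<Longrightarrow> a \<approx> c" by (rule E.e_trans)

lemma brace_zero: "Bz (lzero g) \<approx> FZero"
proof -
  have "Bz (ladd g (lsmul g 0 (lzero g)) (lsmul g 0 (lzero g))) \<approx>
        FAdd (FSmul 0 (Bz (lzero g))) (FSmul 0 (Bz (lzero g)))"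
    by (rule qext_eq.rel8) simp_all
  also have "\<dots> \<approx> FAdd FZero FZero" by (intro E.e_add E.zero_sm) simp_all
  also have "\<dots> \<approx> FZero" by (rule E.a_zero) simp
  finally show ?thesis by (simp add: G.zero_sm G.a_zero)
qed

lemma brace_add: assumes "x \<in> lcarrier g" "y \<in> lcarrier g"
  shows "Bz (ladd g x y) \<approx> FAdd (Bz x) (Bz y)"
proof -
  have "Bz (ladd g (lsmul g 1 x) (lsmul g 1 y)) \<approx> FAdd (FSmul 1 (Bz x)) (FSmul 1 (Bz y))"
    by (rule qext_eq.rel8) (use assms in simp_all)
  also have "\<dots> \<approx> FAdd (Bz x) (Bz y)" by (intro E.e_add E.s_one) simp_all
  finally show ?thesis using assms by (simp add: G.s_one)
qed

lemma brace_sm: assumes "x \<in> lcarrier g"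
  shows "Bz (lsmul g r x) \<approx> FSmul r (Bz x)"
proof -
  have "Bz (ladd g (lsmul g r x) (lsmul g 0 x)) \<approx> FAdd (FSmul r (Bz x)) (FSmul 0 (Bz x))"
    by (rule qext_eq.rel8) (use assms in simp_all)
  also have "\<dots> \<approx> FAdd (FSmul r (Bz x)) FZero" by (intro E.e_add E.zero_sm) simp_all
  also have "\<dots> \<approx> FSmul r (Bz x)" by (rule E.a_zero) simp
  finally show ?thesis using assms by (simp add: G.zero_sm G.a_zero)
qed

lemma g_neg_sm: "x \<in> lcarrier g \<Longrightarrow> lsmul g (-1) x = lneg g x"
  using G.neg_sm[of x 1] by (simp add: G.s_one)

lemma brace_neg: assumes "x \<in> lcarrier g" shows "Bz (lneg g x) \<approx> FNeg (Bz x)"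
proof -
  have "Bz (lneg g x) = Bz (lsmul g (-1) x)" using assms by (simp add: g_neg_sm)
  also have "\<dots> \<approx> FSmul (-1) (Bz x)" by (rule brace_sm[OF assms])
  also have "\<dots> \<approx> FNeg (FSmul 1 (Bz x))" by (rule E.neg_sm) simp
  also have "\<dots> \<approx> FNeg (Bz x)" by (intro E.e_neg E.s_one) simp
  finally show ?thesis .
qed

lemma wedge_zero_l: assumes "y \<in> lcarrier g" shows "W (lzero g) y \<approx> FZero"
proof -
  have h: "W (ladd g (lzero g) (lzero g)) y \<approx> FAdd (W (lzero g) y) (W (lzero g) y)"
    by (rule qext_eq.rel2) (use assms in simp_all)
  have "FAdd (W (lzero g) y) (W (lzero g) y) \<approx> W (lzero g) y"
    using E.e_sym[OF h] by (simp add: G.a_zero)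
  then show ?thesis by (rule E.idem_zero[rotated]) simp
qed

lemma wedge_anti: assumes a: "a \<in> lcarrier g" and b: "b \<in> lcarrier g"
  shows "W a b \<approx> FNeg (W b a)"
proof -
  have "FZero \<approx> W (ladd g a b) (ladd g a b)"
    by (rule E.e_sym, rule qext_eq.rel11) (use a b in simp)
  also have "\<dots> \<approx> FAdd (W a (ladd g a b)) (W b (ladd g a b))"
    by (rule qext_eq.rel2) (use a b in simp_all)
  also have "\<dots> \<approx> FAdd (FAdd (W a a) (W a b)) (FAdd (W b a) (W b b))"
    by (intro E.e_add qext_eq.rel3) (use a b in simp_all)
  also have "\<dots> \<approx> FAdd (FAdd FZero (W a b)) (FAdd (W b a) FZero)"
    by (intro E.e_add qext_eq.rel11 E.e_refl) (use a b in simp_all)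
  also have "\<dots> \<approx> FAdd (W b a) (W a b)"
    by (rule lin_eq) (simp add: fun_eq_iff)
  finally have "FAdd (W b a) (W a b) \<approx> FZero" by (rule E.e_sym)
  then show ?thesis by (rule E.neg_unique[rotated 2]) simp_all
qed

lemma wedge_negr: assumes "y \<in> lcarrier g" "w \<in> lcarrier g"
  shows "W y (lneg g w) \<approx> FNeg (W y w)"
proof -
  have "W y (lneg g w) = W y (lsmul g (-1) w)" using assms by (simp add: g_neg_sm)
  also have "\<dots> \<approx> FSmul (-1) (W y w)" by (rule E.e_sym, rule qext_eq.rel1b) (use assms in simp_all)
  also have "\<dots> \<approx> FNeg (FSmul 1 (W y w))" by (rule E.neg_sm) simp
  also have "\<dots> \<approx> FNeg (W y w)" by (intro E.e_neg E.s_one) simp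
  finally show ?thesis .
qed

lemma wedge_jacobi: assumes x: "x \<in> lcarrier g" and y: "y \<in> lcarrier g" and z: "z \<in> lcarrier g"
  shows "FAdd (W x (lbr g y z)) (FAdd (W y (lbr g z x)) (W z (lbr g x y))) \<approx> FZero"
proof -
  define A :: "('a xgen, 'r) fterm" where "A = W x (lbr g y z)"
  define B :: "('a xgen, 'r) fterm" where "B = W y (lbr g z x)"
  define Cc :: "('a xgen, 'r) fterm" where "Cc = W z (lbr g x y)"
  have "FNeg Cc \<approx> W (lbr g x y) z"
    unfolding Cc_def by (rule E.e_sym, rule wedge_anti) (use x y z in simp_all)
  also have "\<dots> \<approx> FAdd (W x (lbr g y z)) (FNeg (W y (lbr g x z)))"
    by (rule qext_eq.rel4) (use x y z in simp_all)
  also have "lbr g x z = lneg g (lbr g z x)" by (rule G.br_anti[OF z x])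
  also have "FAdd (W x (lbr g y z)) (FNeg (W y (lneg g (lbr g z x)))) \<approx> FAdd A (FNeg (FNeg B))"
    unfolding A_def B_def by (intro E.e_add E.e_refl E.e_neg wedge_negr) (use x y z in simp_all)
  finally have h: "FNeg Cc \<approx> FAdd A (FNeg (FNeg B))" .
  have "Cc \<approx> FNeg (FNeg Cc)" by (rule E.e_sym, rule E.neg_neg) simp
  also have "\<dots> \<approx> FNeg (FAdd A (FNeg (FNeg B)))" by (rule E.e_neg[OF h])
  finally have hc: "Cc \<approx> FNeg (FAdd A (FNeg (FNeg B)))" .
  have "FAdd A (FAdd B Cc) \<approx> FAdd A (FAdd B (FNeg (FAdd A (FNeg (FNeg B)))))"
    by (intro E.e_add E.e_refl hc)
  also have "\<dots> \<approx> FZero" by (rule lin_eq) (simp add: fun_eq_iff)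
  finally show ?thesis unfolding A_def B_def Cc_def .
qed

end

fun bsum :: "('r::comm_ring_1 \<times> 'a) list \<Rightarrow> ('a xgen, 'r) fterm" where
  "bsum [] = FZero"
| "bsum ((c, x) # L) = FAdd (FSmul c (FGen (XBrace x))) (bsum L)"

definition coef :: "('r::comm_ring_1 \<times> 'a) list \<Rightarrow> 'a \<Rightarrow> 'r" where
  "coef L x = sum_list (map fst (filter (\<lambda>p. snd p = x) L))"

definition negK :: "('r::comm_ring_1 \<times> 'a) list \<Rightarrow> ('r \<times> 'a) list" where
  "negK L = map (\<lambda>(c, x). (- c, x)) L"

definition scK :: "'r::comm_ring_1 \<Rightarrow> ('r \<times> 'a) list \<Rightarrow> ('r \<times> 'a) list" where
  "scK r L = map (\<lambda>(c, x). (r * c, x)) L"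

lemma coef_nil[simp]: "coef [] x = 0" by (simp add: coef_def)
lemma coef_append[simp]: "coef (L @ M) x = coef L x + coef M x" by (simp add: coef_def)
lemma coef_cons[simp]: "coef ((c, y) # L) x = (if y = x then c else 0) + coef L x" by (simp add: coef_def)
lemma coef_negK[simp]: "coef (negK L) x = - coef L x"
  by (induction L) (auto simp: negK_def)
lemma coef_scK[simp]: "coef (scK r L) x = r * coef L x"
  by (induction L) (auto simp: scK_def algebra_simps)
lemma negK_simps[simp]: "negK [] = []" "negK ((c, x) # L) = (- c, x) # negK L" "negK (L @ M) = negK L @ negK M"
  by (simp_all add: negK_def)
lemma scK_simps[simp]: "scK r [] = []" "scK r ((c, x) # L) = (r * c, x) # scK r L" "scK r (L @ M) = scK r L @ scK r M"
  by (simp_all add: scK_def)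
lemma snd_negK[simp]: "snd ` set (negK L) = snd ` set L"
  unfolding negK_def set_map image_image by (simp add: case_prod_beta)
lemma snd_scK[simp]: "snd ` set (scK r L) = snd ` set L"
  unfolding scK_def set_map image_image by (simp add: case_prod_beta)

lemma lin_bsum_append[simp]: "lin (bsum (L @ M)) s = lin (bsum L) s + lin (bsum M) s"
  by (induction L rule: bsum.induct) (auto simp: algebra_simps)
lemma lin_bsum_negK[simp]: "lin (bsum (negK L)) s = - lin (bsum L) s"
  by (induction L rule: bsum.induct) (auto simp: algebra_simps)
lemma lin_bsum_scK[simp]: "lin (bsum (scK r L)) s = r * lin (bsum L) s"
  by (induction L rule: bsum.induct) (auto simp: algebra_simps)
lemma lin_bsum: "lin (bsum L) s = (case s of FGen (XBrace x) \<Rightarrow> coef L x | _ \<Rightarrow> 0)"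
  by (induction L rule: bsum.induct) (auto split: fterm.split xgen.split)

fun valid :: "nat \<Rightarrow> ('a, 'r::comm_ring_1) lie_alg \<Rightarrow> 'a \<times> ('a xgen, 'r) fterm \<times> ('r \<times> 'a) list \<Rightarrow> bool" where
  "valid q g (y, t, L) \<longleftrightarrow> y \<in> lcarrier g \<and> snd ` set L \<subseteq> lcarrier g \<and> qext_eq q g (FAdd (FSmul (of_nat q) t) (bsum L)) (FGen (XBrace y))"

fun req :: "nat \<Rightarrow> ('a, 'r::comm_ring_1) lie_alg \<Rightarrow> 'a \<times> ('a xgen, 'r) fterm \<times> ('r \<times> 'a) list
    \<Rightarrow> 'a \<times> ('a xgen, 'r) fterm \<times> ('r \<times> 'a) list \<Rightarrow> bool" where
  "req q g (y, t, L) (y', t', L') \<longleftrightarrow> y = y' \<and>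
     (\<exists>K. snd ` set K \<subseteq> lcarrier g \<and> (\<forall>x. coef L x = coef L' x + of_nat q * coef K x)
        \<and> qext_eq q g (FAdd t (bsum K)) t')"

fun ad :: "('a, 'r::comm_ring_1) lie_alg \<Rightarrow> 'a \<times> ('a xgen, 'r) fterm \<times> ('r \<times> 'a) list
    \<Rightarrow> 'a \<times> ('a xgen, 'r) fterm \<times> ('r \<times> 'a) list \<Rightarrow> 'a \<times> ('a xgen, 'r) fterm \<times> ('r \<times> 'a) list" where
  "ad g (y, t, L) (y', t', L') = (ladd g y y', FAdd t t', L @ L')"

fun ng :: "('a, 'r::comm_ring_1) lie_alg \<Rightarrow> 'a \<times> ('a xgen, 'r) fterm \<times> ('r \<times> 'a) list
    \<Rightarrow> 'a \<times> ('a xgen, 'r) fterm \<times> ('r \<times> 'a) list" where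
  "ng g (y, t, L) = (lneg g y, FNeg t, negK L)"

fun sc :: "('a, 'r::comm_ring_1) lie_alg \<Rightarrow> 'r \<Rightarrow> 'a \<times> ('a xgen, 'r) fterm \<times> ('r \<times> 'a) list
    \<Rightarrow> 'a \<times> ('a xgen, 'r) fterm \<times> ('r \<times> 'a) list" where
  "sc g r (y, t, L) = (lsmul g r y, FSmul r t, scK r L)"

fun bk :: "('a, 'r::comm_ring_1) lie_alg \<Rightarrow> 'a \<times> ('a xgen, 'r) fterm \<times> ('r \<times> 'a) list
    \<Rightarrow> 'a \<times> ('a xgen, 'r) fterm \<times> ('r \<times> 'a) list \<Rightarrow> 'a \<times> ('a xgen, 'r) fterm \<times> ('r \<times> 'a) list" where
  "bk g (y, t, L) (y', t', L') = (lbr g y y', FGen (XWedge y y'), [])"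

definition zr :: "('a, 'r::comm_ring_1) lie_alg \<Rightarrow> 'a \<times> ('a xgen, 'r) fterm \<times> ('r \<times> 'a) list" where
  "zr g = (lzero g, FZero, [])"

definition ur :: "'a \<Rightarrow> 'a \<times> ('a xgen, 'r::comm_ring_1) fterm \<times> ('r \<times> 'a) list" where
  "ur y = (y, FZero, [(1, y)])"

context qsetup
begin

lemma req_simple: "y = y' \<Longrightarrow> (\<And>x. coef L x = coef L' x) \<Longrightarrow> t \<approx> t' \<Longrightarrow> req q g (y, t, L) (y', t', L')"
  apply simp
  apply (rule exI[of _ "[]"])
  apply simp
  by (rule E.e_trans[OF E.a_zero]) simp_all

lemma req_refl: "req q g a a"
proof -
  obtain y t L where "a = (y, t, L)" by (cases a)
  then show ?thesis using req_simple[of y y L L t t] by simp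
qed

lemma req_sym: "req q g a b \<Longrightarrow> req q g b a"
proof (cases a, cases b)
  fix y t L y' t' L' assume ab: "a = (y, t, L)" "b = (y', t', L')" and r: "req q g a b"
  then obtain K where K: "snd ` set K \<subseteq> lcarrier g" "\<forall>x. coef L x = coef L' x + of_nat q * coef K x"
     "FAdd t (bsum K) \<approx> t'" and y: "y = y'" by auto
  have "FAdd t' (bsum (negK K)) \<approx> FAdd (FAdd t (bsum K)) (bsum (negK K))"
    by (intro E.e_add E.e_refl E.e_sym[OF K(3)])
  also have "\<dots> \<approx> t" by (rule lin_eq) (simp add: fun_eq_iff)
  finally have T: "FAdd t' (bsum (negK K)) \<approx> t" .
  show ?thesis unfolding ab req.simps
    by (intro conjI exI[of _ "negK K"] T) (use K y in \<open>simp_all add: algebra_simps image_Un\<close>)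
qed

lemma req_trans: "req q g a b \<Longrightarrow> req q g b c \<Longrightarrow> req q g a c"
proof (cases a, cases b, cases c)
  fix y t L y' t' L' y'' t'' L''
  assume abc: "a = (y, t, L)" "b = (y', t', L')" "c = (y'', t'', L'')" and r: "req q g a b" "req q g b c"
  then obtain K where K: "snd ` set K \<subseteq> lcarrier g" "\<forall>x. coef L x = coef L' x + of_nat q * coef K x"
     "FAdd t (bsum K) \<approx> t'" and y: "y = y'" by auto
  obtain K' where K': "snd ` set K' \<subseteq> lcarrier g" "\<forall>x. coef L' x = coef L'' x + of_nat q * coef K' x"
     "FAdd t' (bsum K') \<approx> t''" and y': "y' = y''" using r abc by auto
  have "FAdd t (bsum (K @ K')) \<approx> FAdd (FAdd t (bsum K)) (bsum K')"
    by (rule lin_eq) (simp add: fun_eq_iff algebra_simps)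
  also have "\<dots> \<approx> FAdd t' (bsum K')" by (intro E.e_add E.e_refl K(3))
  also have "\<dots> \<approx> t''" by (rule K'(3))
  finally have T: "FAdd t (bsum (K @ K')) \<approx> t''" .
  show ?thesis unfolding abc req.simps
    by (intro conjI exI[of _ "K @ K'"] T) (use K K' y y' in \<open>simp_all add: algebra_simps image_Un\<close>)
qed

lemma req_fst: "req q g a b \<Longrightarrow> fst a = fst b"
  by (cases a, cases b) auto

lemma req_ad: "req q g a a' \<Longrightarrow> req q g b b' \<Longrightarrow> req q g (ad g a b) (ad g a' b')"
proof (cases a, cases a', cases b, cases b')
  fix y t L y' t' L' z s M z' s' M'
  assume eqs: "a = (y, t, L)" "a' = (y', t', L')" "b = (z, s, M)" "b' = (z', s', M')"
    and r: "req q g a a'" "req q g b b'"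
  then obtain K where K: "snd ` set K \<subseteq> lcarrier g" "\<forall>x. coef L x = coef L' x + of_nat q * coef K x"
     "FAdd t (bsum K) \<approx> t'" and y: "y = y'" by auto
  obtain K' where K': "snd ` set K' \<subseteq> lcarrier g" "\<forall>x. coef M x = coef M' x + of_nat q * coef K' x"
     "FAdd s (bsum K') \<approx> s'" and z: "z = z'" using r eqs by auto
  have "FAdd (FAdd t s) (bsum (K @ K')) \<approx> FAdd (FAdd t (bsum K)) (FAdd s (bsum K'))"
    by (rule lin_eq) (simp add: fun_eq_iff algebra_simps)
  also have "\<dots> \<approx> FAdd t' s'" by (intro E.e_add K(3) K'(3))
  finally have T: "FAdd (FAdd t s) (bsum (K @ K')) \<approx> FAdd t' s'" .
  show ?thesis unfolding eqs ad.simps req.simps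
    by (intro conjI exI[of _ "K @ K'"] T) (use K K' y z in \<open>simp_all add: algebra_simps image_Un\<close>)
qed

lemma req_ng: "req q g a a' \<Longrightarrow> req q g (ng g a) (ng g a')"
proof (cases a, cases a')
  fix y t L y' t' L'
  assume eqs: "a = (y, t, L)" "a' = (y', t', L')" and r: "req q g a a'"
  then obtain K where K: "snd ` set K \<subseteq> lcarrier g" "\<forall>x. coef L x = coef L' x + of_nat q * coef K x"
     "FAdd t (bsum K) \<approx> t'" and y: "y = y'" by auto
  have "FAdd (FNeg t) (bsum (negK K)) \<approx> FNeg (FAdd t (bsum K))"
    by (rule lin_eq) (simp add: fun_eq_iff algebra_simps)
  also have "\<dots> \<approx> FNeg t'" by (intro E.e_neg K(3))
  finally have T: "FAdd (FNeg t) (bsum (negK K)) \<approx> FNeg t'" .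
  show ?thesis unfolding eqs ng.simps req.simps
    by (intro conjI exI[of _ "negK K"] T) (use K y in \<open>simp_all add: algebra_simps image_Un\<close>)
qed

lemma req_sc: "req q g a a' \<Longrightarrow> req q g (sc g r a) (sc g r a')"
proof (cases a, cases a')
  fix y t L y' t' L'
  assume eqs: "a = (y, t, L)" "a' = (y', t', L')" and r: "req q g a a'"
  then obtain K where K: "snd ` set K \<subseteq> lcarrier g" "\<forall>x. coef L x = coef L' x + of_nat q * coef K x"
     "FAdd t (bsum K) \<approx> t'" and y: "y = y'" by auto
  have "FAdd (FSmul r t) (bsum (scK r K)) \<approx> FSmul r (FAdd t (bsum K))"
    by (rule lin_eq) (simp add: fun_eq_iff algebra_simps)
  also have "\<dots> \<approx> FSmul r t'" by (intro E.e_sm K(3))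
  finally have T: "FAdd (FSmul r t) (bsum (scK r K)) \<approx> FSmul r t'" .
  show ?thesis unfolding eqs sc.simps req.simps
    by (intro conjI exI[of _ "scK r K"] T) (use K y in \<open>simp_all add: algebra_simps image_Un\<close>)
qed

lemma bk_req: "req q g a a' \<Longrightarrow> req q g b b' \<Longrightarrow> bk g a b = bk g a' b'"
  by (cases a, cases a', cases b, cases b') auto

lemma valid_zr: "valid q g (zr g)"
proof -
  have "FAdd (FSmul (of_nat q) FZero) (bsum []) \<approx> FZero" by (rule lin_eq) (simp add: fun_eq_iff)
  also have "FZero \<approx> Bz (lzero g)" by (rule E.e_sym[OF brace_zero])
  finally show ?thesis by (simp add: zr_def)
qed

lemma valid_ur: "y \<in> lcarrier g \<Longrightarrow> valid q g (ur y)"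
  unfolding ur_def by (simp, rule lin_eq) (simp add: fun_eq_iff)

lemma valid_ad: "valid q g a \<Longrightarrow> valid q g b \<Longrightarrow> valid q g (ad g a b)"
proof (cases a, cases b)
  fix y t L z s M assume eqs: "a = (y, t, L)" "b = (z, s, M)" and v: "valid q g a" "valid q g b"
  have "FAdd (FSmul (of_nat q) (FAdd t s)) (bsum (L @ M)) \<approx>
        FAdd (FAdd (FSmul (of_nat q) t) (bsum L)) (FAdd (FSmul (of_nat q) s) (bsum M))"
    by (rule lin_eq) (simp add: fun_eq_iff algebra_simps)
  also have "\<dots> \<approx> FAdd (Bz y) (Bz z)" using v eqs by (intro E.e_add) auto
  also have "\<dots> \<approx> Bz (ladd g y z)" using v eqs by (intro E.e_sym[OF brace_add]) auto
  finally show ?thesis using eqs v by (simp add: image_Un)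
qed

lemma valid_ng: "valid q g a \<Longrightarrow> valid q g (ng g a)"
proof (cases a)
  fix y t L assume eqs: "a = (y, t, L)" and v: "valid q g a"
  have "FAdd (FSmul (of_nat q) (FNeg t)) (bsum (negK L)) \<approx>
        FNeg (FAdd (FSmul (of_nat q) t) (bsum L))"
    by (rule lin_eq) (simp add: fun_eq_iff algebra_simps)
  also have "\<dots> \<approx> FNeg (Bz y)" using v eqs by (intro E.e_neg) auto
  also have "\<dots> \<approx> Bz (lneg g y)" using v eqs by (intro E.e_sym[OF brace_neg]) auto
  finally show ?thesis using eqs v by simp
qed

lemma valid_sc: "valid q g a \<Longrightarrow> valid q g (sc g r a)"
proof (cases a)
  fix y t L assume eqs: "a = (y, t, L)" and v: "valid q g a"
  have "FAdd (FSmul (of_nat q) (FSmul r t)) (bsum (scK r L)) \<approx>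
        FSmul r (FAdd (FSmul (of_nat q) t) (bsum L))"
    by (rule lin_eq) (simp add: fun_eq_iff algebra_simps)
  also have "\<dots> \<approx> FSmul r (Bz y)" using v eqs by (intro E.e_sm) auto
  also have "\<dots> \<approx> Bz (lsmul g r y)" using v eqs by (intro E.e_sym[OF brace_sm]) auto
  finally show ?thesis using eqs v by simp
qed

lemma valid_bk: "valid q g a \<Longrightarrow> valid q g b \<Longrightarrow> valid q g (bk g a b)"
proof (cases a, cases b)
  fix y t L z s M assume eqs: "a = (y, t, L)" "b = (z, s, M)" and v: "valid q g a" "valid q g b"
  have "FAdd (FSmul (of_nat q) (W y z)) (bsum []) \<approx> FSmul (of_nat q) (W y z)"
    by (rule lin_eq) (simp add: fun_eq_iff)
  also have "\<dots> \<approx> Bz (lbr g y z)" using v eqs by (intro E.e_sym[OF qext_eq.rel10]) auto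
  finally show ?thesis using eqs v by simp
qed

end

context qsetup
begin

lemma req_simple': "fst a = fst b \<Longrightarrow> (\<And>x. coef (snd (snd a)) x = coef (snd (snd b)) x) \<Longrightarrow>
   fst (snd a) \<approx> fst (snd b) \<Longrightarrow> req q g a b"
  by (cases a rule: prod_cases3, cases b rule: prod_cases3) (simp only: fst_conv snd_conv req_simple)


lemma rep_assoc: "valid q g a \<Longrightarrow> valid q g b \<Longrightarrow> valid q g c \<Longrightarrow> req q g (ad g (ad g a b) c) (ad g a (ad g b c))"
  by (cases a rule: prod_cases3, cases b rule: prod_cases3, cases c rule: prod_cases3) (rule req_simple'; simp add: zr_def  G.a_assoc E.a_assoc)

lemma rep_comm: "valid q g a \<Longrightarrow> valid q g b \<Longrightarrow> req q g (ad g a b) (ad g b a)"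
  by (cases a rule: prod_cases3, cases b rule: prod_cases3) (rule req_simple'; simp add: zr_def  G.a_comm E.a_comm)

lemma rep_zero: "valid q g a \<Longrightarrow> req q g (ad g a (zr g)) a"
  by (cases a rule: prod_cases3) (rule req_simple'; simp add: zr_def  G.a_zero E.a_zero)

lemma rep_neg: "valid q g a \<Longrightarrow> req q g (ad g a (ng g a)) (zr g)"
  by (cases a rule: prod_cases3) (rule req_simple'; simp add: zr_def  G.a_neg E.a_neg)

lemma rep_sm_add: "valid q g a \<Longrightarrow> valid q g b \<Longrightarrow> req q g (sc g r (ad g a b)) (ad g (sc g r a) (sc g r b))"
  by (cases a rule: prod_cases3, cases b rule: prod_cases3) (rule req_simple'; simp add: zr_def  G.s_add E.s_add)

lemma rep_add_sm: "valid q g a \<Longrightarrow> req q g (sc g (r + s) a) (ad g (sc g r a) (sc g s a))"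
  by (cases a rule: prod_cases3) (rule req_simple'; simp add: zr_def  G.s_distr E.s_distr algebra_simps)

lemma rep_sm_sm: "valid q g a \<Longrightarrow> req q g (sc g r (sc g s a)) (sc g (r * s) a)"
  by (cases a rule: prod_cases3) (rule req_simple'; simp add: zr_def  G.s_ss E.s_ss algebra_simps)

lemma rep_one: "valid q g a \<Longrightarrow> req q g (sc g 1 a) a"
  by (cases a rule: prod_cases3) (rule req_simple'; simp add: zr_def  G.s_one E.s_one)

lemma rep_br_addl: "valid q g a \<Longrightarrow> valid q g b \<Longrightarrow> valid q g c \<Longrightarrow>
    req q g (bk g (ad g a b) c) (ad g (bk g a c) (bk g b c))"
  by (cases a rule: prod_cases3, cases b rule: prod_cases3, cases c rule: prod_cases3)
     (rule req_simple'; simp add: zr_def  G.b_addl qext_eq.rel2)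

lemma rep_br_addr: "valid q g a \<Longrightarrow> valid q g b \<Longrightarrow> valid q g c \<Longrightarrow>
    req q g (bk g a (ad g b c)) (ad g (bk g a b) (bk g a c))"
  by (cases a rule: prod_cases3, cases b rule: prod_cases3, cases c rule: prod_cases3)
     (rule req_simple'; simp add: zr_def  G.b_addr qext_eq.rel3)

lemma rep_br_sml: "valid q g a \<Longrightarrow> valid q g b \<Longrightarrow> req q g (bk g (sc g r a) b) (sc g r (bk g a b))"
  by (cases a rule: prod_cases3, cases b rule: prod_cases3)
     (rule req_simple'; simp add: zr_def  G.b_sml E.e_sym[OF qext_eq.rel1a])

lemma rep_br_smr: "valid q g a \<Longrightarrow> valid q g b \<Longrightarrow> req q g (bk g a (sc g r b)) (sc g r (bk g a b))"
  by (cases a rule: prod_cases3, cases b rule: prod_cases3)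
     (rule req_simple'; simp add: zr_def  G.b_smr E.e_sym[OF qext_eq.rel1b])

lemma rep_br_self: "valid q g a \<Longrightarrow> req q g (bk g a a) (zr g)"
  by (cases a rule: prod_cases3) (rule req_simple'; simp add: zr_def  G.b_self qext_eq.rel11)

lemma rep_jac: "valid q g a \<Longrightarrow> valid q g b \<Longrightarrow> valid q g c \<Longrightarrow>
    req q g (ad g (bk g a (bk g b c)) (ad g (bk g b (bk g c a)) (bk g c (bk g a b)))) (zr g)"
  by (cases a rule: prod_cases3, cases b rule: prod_cases3, cases c rule: prod_cases3)
     (rule req_simple'; simp add: zr_def  G.b_jac wedge_jacobi)

lemma cent1: "valid q g a \<Longrightarrow> fst a = lzero g \<Longrightarrow> valid q g b \<Longrightarrow> req q g (bk g a b) (zr g)"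
  by (cases a rule: prod_cases3, cases b rule: prod_cases3) (rule req_simple'; simp add: zr_def  G.br_zero_l wedge_zero_l)

lemma cent3: assumes "valid q g a" "fst a = lzero g" shows "req q g (sc g (of_nat q) a) (zr g)"
proof (cases a rule: prod_cases3)
  case (fields y t L)
  have "FAdd (FSmul (of_nat q) t) (bsum L) \<approx> FZero"
    using assms fields brace_zero E.e_trans by auto
  then show ?thesis using assms fields
    by (simp add: zr_def G.sm_zero del: of_nat_eq_0_iff) (intro exI[of _ L], simp)
qed

lemma bsum_zero_q0: "q = 0 \<Longrightarrow> snd ` set K \<subseteq> lcarrier g \<Longrightarrow> bsum K \<approx> FZero"
proof (induction K rule: bsum.induct)
  case 1 then show ?case by simp
next
  case (2 c x L)
  have "FAdd (FSmul c (Bz x)) (bsum L) \<approx> FAdd (FSmul c FZero) FZero"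
    using 2 by (intro E.e_add E.e_sm qext_eq.rel_q0) auto
  also have "\<dots> \<approx> FZero" by (rule lin_eq) (simp add: fun_eq_iff)
  finally show ?case by simp
qed

lemma cent2:
  assumes tf: "q_torsion_free q TYPE('r)" and v: "valid q g a"
    and c: "\<And>b. valid q g b \<Longrightarrow> req q g (bk g a b) (zr g)"
  shows "fst a \<in> ext_center_q q g"
proof (cases a rule: prod_cases3)
  case (fields y t L)
  have "W y y' \<approx> FZero" if y': "y' \<in> lcarrier g" for y'
  proof -
    have "req q g (bk g a (ur y')) (zr g)" using c valid_ur y' by blast
    then obtain K where K: "snd ` set K \<subseteq> lcarrier g" "\<forall>x. 0 = of_nat q * coef K x"
        "FAdd (W y y') (bsum K) \<approx> FZero"
      using fields by (auto simp: ur_def zr_def)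
    have bz: "bsum K \<approx> FZero"
    proof (cases "q = 0")
      case True then show ?thesis using bsum_zero_q0 K by blast
    next
      case False
      have "coef K x = 0" for x
      proof -
        have "of_nat q * coef K x = 0" using K(2) by metis
        then show ?thesis using tf False unfolding q_torsion_free_def by auto
      qed
      then show ?thesis by (intro lin_eq) (simp add: fun_eq_iff lin_bsum split: fterm.split xgen.split)
    qed
    have "W y y' \<approx> FAdd (W y y') FZero" by (rule E.e_sym, rule E.a_zero) simp
    also have "\<dots> \<approx> FAdd (W y y') (bsum K)" by (intro E.e_add E.e_refl E.e_sym[OF bz])
    also have "\<dots> \<approx> FZero" by (rule K(3))
    finally show ?thesis .
  qed
  then show ?thesis using v fields by (simp add: ext_center_q_def)
qed

end

definition P3 :: "('a list \<Rightarrow> 'r::zero) \<Rightarrow> ('a list \<Rightarrow> 'r) \<Rightarrow> ('a list \<Rightarrow> 'r) \<Rightarrow> 'a list \<Rightarrow> 'r" where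
  "P3 f g h xs = (let n = length xs; k = n mod 3; ys = take (n div 3) (drop k xs) in
      if xs = replicate k undefined @ ys @ ys @ ys then (if k = 0 then f ys else if k = 1 then g ys else h ys) else 0)"

lemma P3_at:
  assumes "k < 3"
  shows "P3 f g h (replicate k undefined @ ys @ ys @ ys) = (if k = 0 then f ys else if k = 1 then g ys else h ys)"
proof -
  let ?xs = "replicate k undefined @ ys @ ys @ ys"
  have l: "length ?xs = k + 3 * length ys" by simp
  have m: "length ?xs mod 3 = k" "length ?xs div 3 = length ys" using assms unfolding l by presburger+
  have "take (length ys) (drop k ?xs) = ys" by simp
  then show ?thesis unfolding P3_def Let_def m by simp
qed

lemma P3_0: "P3 f g h (ys @ ys @ ys) = f ys" using P3_at[of 0] by simp
lemma P3_1: "P3 f g h (undefined # ys @ ys @ ys) = g ys" using P3_at[of 1] by simp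
lemma P3_2: "P3 f g h (undefined # undefined # ys @ ys @ ys) = h ys"
  using P3_at[of 2] by (simp add: numeral_2_eq_2)

lemma P3_inj: assumes "P3 f g h = P3 f' g' h'" shows "f = f' \<and> g = g' \<and> h = h'"
proof (intro conjI ext)
  fix ys
  show "f ys = f' ys" by (metis P3_0 assms)
  show "g ys = g' ys" by (metis P3_1 assms)
  show "h ys = h' ys" by (metis P3_2 assms)
qed

lemma P3_eq_iff: "P3 f g h = P3 f' g' h' \<longleftrightarrow> f = f' \<and> g = g' \<and> h = h'"
  using P3_inj by blast

definition Tg :: "nat \<Rightarrow> 'a list \<Rightarrow> 'r::zero_neq_one" where
  "Tg n = (\<lambda>xs. if length xs = n then 1 else 0)"

lemma Tg_eq_iff: "(Tg n :: 'a list \<Rightarrow> 'r::zero_neq_one) = Tg m \<longleftrightarrow> n = m"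
proof
  assume "(Tg n :: 'a list \<Rightarrow> 'r) = Tg m"
  from fun_cong[OF this, of "replicate n undefined"] show "n = m"
    by (auto simp: Tg_def split: if_splits)
qed simp

definition Ac :: "'a \<Rightarrow> 'a list \<Rightarrow> 'r::zero_neq_one" where
  "Ac a = (\<lambda>xs. if xs = [a] then 1 else 0)"

lemma Ac_eq_iff: "(Ac a :: 'a list \<Rightarrow> 'r::zero_neq_one) = Ac b \<longleftrightarrow> a = b"
proof
  assume "(Ac a :: 'a list \<Rightarrow> 'r) = Ac b"
  from fun_cong[OF this, of "[a]"] show "a = b" by (auto simp: Ac_def split: if_splits)
qed simp

lemma const_eq_iff: "((\<lambda>_. c) = (\<lambda>_. d)) \<longleftrightarrow> c = d"
  by (metis)

fun enct :: "('a xgen, 'r::zero_neq_one) fterm \<Rightarrow> 'a list \<Rightarrow> 'r" where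
  "enct (FGen (XWedge a b)) = P3 (Tg 0) (Ac a) (Ac b)"
| "enct (FGen (XBrace a)) = P3 (Tg 1) (Ac a) (\<lambda>_. 0)"
| "enct FZero = P3 (Tg 2) (\<lambda>_. 0) (\<lambda>_. 0)"
| "enct (FAdd x y) = P3 (Tg 3) (enct x) (enct y)"
| "enct (FNeg x) = P3 (Tg 4) (enct x) (\<lambda>_. 0)"
| "enct (FSmul c x) = P3 (Tg 5) (\<lambda>_. c) (enct x)"
| "enct (FBr x y) = P3 (Tg 6) (enct x) (enct y)"

lemma enct_inj: "enct s = enct t \<Longrightarrow> s = t"
proof (induction s arbitrary: t)
  case (FGen x)
  then show ?case
    by (cases x; cases t rule: enct.cases) (auto simp: P3_eq_iff Tg_eq_iff Ac_eq_iff)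
next
  case FZero
  then show ?case by (cases t rule: enct.cases) (auto simp: P3_eq_iff Tg_eq_iff)
next
  case (FAdd x1 x2)
  then show ?case by (cases t rule: enct.cases) (auto simp: P3_eq_iff Tg_eq_iff)
next
  case (FNeg x)
  then show ?case by (cases t rule: enct.cases) (auto simp: P3_eq_iff Tg_eq_iff)
next
  case (FSmul x1 x2)
  then show ?case by (cases t rule: enct.cases) (auto simp: P3_eq_iff Tg_eq_iff const_eq_iff)
next
  case (FBr x1 x2)
  then show ?case by (cases t rule: enct.cases) (auto simp: P3_eq_iff Tg_eq_iff)
qed

fun encL :: "('r::zero_neq_one \<times> 'a) list \<Rightarrow> 'a list \<Rightarrow> 'r" where
  "encL [] = P3 (Tg 0) (\<lambda>_. 0) (\<lambda>_. 0)"
| "encL ((c, a) # L) = P3 (Tg 1) (P3 (\<lambda>_. c) (Ac a) (\<lambda>_. 0)) (encL L)"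

lemma encL_inj: "encL L = encL M \<Longrightarrow> L = M"
proof (induction L arbitrary: M)
  case Nil then show ?case by (cases M rule: encL.cases) (auto simp: P3_eq_iff Tg_eq_iff)
next
  case (Cons p L)
  then show ?case
    by (cases p; cases M rule: encL.cases) (auto simp: P3_eq_iff Tg_eq_iff Ac_eq_iff const_eq_iff)
qed

fun enc :: "'a \<times> ('a xgen, 'r::zero_neq_one) fterm \<times> ('r \<times> 'a) list \<Rightarrow> 'a list \<Rightarrow> 'r" where
  "enc (y, t, L) = P3 (Ac y) (enct t) (encL L)"

lemma enc_inj: "inj enc"
proof (rule injI)
  fix a b :: "'a \<times> ('a xgen, 'r::zero_neq_one) fterm \<times> ('r \<times> 'a) list"
  assume "enc a = enc b"
  then show "a = b"
    by (cases a rule: prod_cases3, cases b rule: prod_cases3)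
       (auto simp: P3_eq_iff Ac_eq_iff dest: enct_inj encL_inj)
qed

definition coset :: "('a, 'r) lie_alg \<Rightarrow> 'a \<Rightarrow> 'a set" where
  "coset L u = {ladd L u z | z. z \<in> lie_center L}"

locale lsetup =
  fixes L :: "('a, 'r::comm_ring_1) lie_alg"
  assumes LAm: "lie_algebra L"
begin

sublocale M: alie "lcarrier L" "(=)" "ladd L" "lzero L" "lneg L" "lsmul L" "lbr L"
  by (rule lie_algebra_alie[OF LAm])

abbreviation "Z \<equiv> lie_center L"
abbreviation "CL \<equiv> lcarrier L"

lemma Z_C: "z \<in> Z \<Longrightarrow> z \<in> CL" by (simp add: lie_center_def)
lemma Z_brl: "z \<in> Z \<Longrightarrow> x \<in> CL \<Longrightarrow> lbr L z x = lzero L" by (simp add: lie_center_def)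
lemma Z_brr: assumes "z \<in> Z" "x \<in> CL" shows "lbr L x z = lzero L"
proof -
  have "lbr L x z = lneg L (lbr L z x)" using M.br_anti[of z x] assms Z_C by simp
  also have "\<dots> = lzero L" using assms Z_brl M.neg_zero by simp
  finally show ?thesis .
qed

lemma Z_zero: "lzero L \<in> Z"
  unfolding lie_center_def using M.br_zero_l by simp

lemma Z_add: assumes "z \<in> Z" "w \<in> Z" shows "ladd L z w \<in> Z"
proof -
  have "lbr L (ladd L z w) x = lzero L" if "x \<in> CL" for x
  proof -
    have "lbr L (ladd L z w) x = ladd L (lbr L z x) (lbr L w x)" using M.b_addl assms Z_C that by simp
    also have "\<dots> = lzero L" using assms Z_brl that M.a_zero[of "lzero L"] by simp
    finally show ?thesis .
  qed
  moreover have "ladd L z w \<in> CL" using assms Z_C by simp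
  ultimately show ?thesis unfolding lie_center_def by simp
qed

lemma Z_neg: assumes "z \<in> Z" shows "lneg L z \<in> Z"
proof -
  have "lbr L (lneg L z) x = lzero L" if "x \<in> CL" for x
  proof -
    have "lbr L (lneg L z) x = lneg L (lbr L z x)" using M.br_negl assms Z_C that by simp
    also have "\<dots> = lzero L" using assms Z_brl that M.neg_zero by simp
    finally show ?thesis .
  qed
  moreover have "lneg L z \<in> CL" using assms Z_C by simp
  ultimately show ?thesis unfolding lie_center_def by simp
qed

lemma Z_sm: assumes "z \<in> Z" shows "lsmul L r z \<in> Z"
proof -
  have "lbr L (lsmul L r z) x = lzero L" if "x \<in> CL" for x
  proof -
    have "lbr L (lsmul L r z) x = lsmul L r (lbr L z x)" using M.b_sml assms Z_C that by simp
    also have "\<dots> = lzero L" using assms Z_brl that M.sm_zero by simp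
    finally show ?thesis .
  qed
  moreover have "lsmul L r z \<in> CL" using assms Z_C by simp
  ultimately show ?thesis unfolding lie_center_def by simp
qed

lemma coset_mem: "u \<in> CL \<Longrightarrow> a \<in> coset L u \<longleftrightarrow> (\<exists>z\<in>Z. a = ladd L u z)"
  by (auto simp: coset_def)

lemma coset_self: "u \<in> CL \<Longrightarrow> u \<in> coset L u"
  using Z_zero M.a_zero by (force simp: coset_def)

lemma quot_add: assumes u: "u \<in> CL" and v: "v \<in> CL"
  shows "ladd (quot_center L) (coset L u) (coset L v) = coset L (ladd L u v)"
proof -
  have "{ladd L a b |a b. a \<in> coset L u \<and> b \<in> coset L v} = coset L (ladd L u v)"
  proof (intro equalityI subsetI)
    fix x assume "x \<in> {ladd L a b |a b. a \<in> coset L u \<and> b \<in> coset L v}"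
    then obtain z1 z2 where z: "z1 \<in> Z" "z2 \<in> Z" "x = ladd L (ladd L u z1) (ladd L v z2)"
      by (auto simp: coset_def)
    then have "x = ladd L (ladd L u v) (ladd L z1 z2)" using u v Z_C by (simp add: M.swap4)
    then show "x \<in> coset L (ladd L u v)" using z Z_add by (auto simp: coset_def)
  next
    fix x assume "x \<in> coset L (ladd L u v)"
    then obtain z where z: "z \<in> Z" "x = ladd L (ladd L u v) z" by (auto simp: coset_def)
    then have "x = ladd L (ladd L u z) (ladd L v (lzero L))"
      using M.swap4[of u z v "lzero L"] M.a_zero u v Z_C[OF z(1)] by simp
    moreover have "ladd L u z \<in> coset L u" "ladd L v (lzero L) \<in> coset L v"
      using z Z_zero by (auto simp: coset_def)
    ultimately show "x \<in> {ladd L a b |a b. a \<in> coset L u \<and> b \<in> coset L v}" by blast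
  qed
  then show ?thesis by (simp add: quot_center_def Let_def)
qed

lemma quot_sm: assumes u: "u \<in> CL"
  shows "lsmul (quot_center L) r (coset L u) = coset L (lsmul L r u)"
proof -
  have "{ladd L (lsmul L r a) z |a z. a \<in> coset L u \<and> z \<in> Z} = coset L (lsmul L r u)"
  proof (intro equalityI subsetI)
    fix x assume "x \<in> {ladd L (lsmul L r a) z |a z. a \<in> coset L u \<and> z \<in> Z}"
    then obtain z1 z where z: "z1 \<in> Z" "z \<in> Z" "x = ladd L (lsmul L r (ladd L u z1)) z"
      by (auto simp: coset_def)
    then have "x = ladd L (lsmul L r u) (ladd L (lsmul L r z1) z)" using u Z_C
      by (simp add: M.s_add M.a_assoc)
    then show "x \<in> coset L (lsmul L r u)" using z Z_add Z_sm by (auto simp: coset_def)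
  next
    fix x assume "x \<in> coset L (lsmul L r u)"
    then obtain z where z: "z \<in> Z" "x = ladd L (lsmul L r u) z" by (auto simp: coset_def)
    moreover have "u \<in> coset L u" by (rule coset_self[OF u])
    ultimately show "x \<in> {ladd L (lsmul L r a) z |a z. a \<in> coset L u \<and> z \<in> Z}" by blast
  qed
  then show ?thesis by (simp add: quot_center_def Let_def)
qed

lemma quot_br: assumes u: "u \<in> CL" and v: "v \<in> CL"
  shows "lbr (quot_center L) (coset L u) (coset L v) = coset L (lbr L u v)"
proof -
  have "{ladd L (lbr L a b) z |a b z. a \<in> coset L u \<and> b \<in> coset L v \<and> z \<in> Z} = coset L (lbr L u v)"
  proof (intro equalityI subsetI)
    fix x assume "x \<in> {ladd L (lbr L a b) z |a b z. a \<in> coset L u \<and> b \<in> coset L v \<and> z \<in> Z}"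
    then obtain z1 z2 z where z: "z1 \<in> Z" "z2 \<in> Z" "z \<in> Z"
      "x = ladd L (lbr L (ladd L u z1) (ladd L v z2)) z"
      by (auto simp: coset_def)
    have "lbr L (ladd L u z1) (ladd L v z2) = lbr L u v"
      using u v z Z_C by (simp add: M.b_addl M.b_addr Z_brl Z_brr M.a_zero)
    then show "x \<in> coset L (lbr L u v)" using z by (auto simp: coset_def)
  next
    fix x assume "x \<in> coset L (lbr L u v)"
    then obtain z where z: "z \<in> Z" "x = ladd L (lbr L u v) z" by (auto simp: coset_def)
    moreover have "u \<in> coset L u" "v \<in> coset L v" by (rule coset_self[OF u], rule coset_self[OF v])
    ultimately show "x \<in> {ladd L (lbr L a b) z |a b z. a \<in> coset L u \<and> b \<in> coset L v \<and> z \<in> Z}"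
      by blast
  qed
  then show ?thesis by (simp add: quot_center_def Let_def)
qed

lemma sub_cancel1: assumes u: "u \<in> CL" and v: "v \<in> CL"
  shows "ladd L v (ladd L u (lneg L v)) = u"
proof -
  have "ladd L v (ladd L u (lneg L v)) = ladd L v (ladd L (lneg L v) u)" using u v M.a_comm by simp
  also have "\<dots> = ladd L (ladd L v (lneg L v)) u" using u v M.a_assoc by simp
  also have "\<dots> = u" using u v M.a_neg M.zero_add by simp
  finally show ?thesis .
qed

lemma sub_cancel2: assumes u: "u \<in> CL" and z: "z \<in> CL"
  shows "ladd L (ladd L u z) (lneg L u) = z"
proof -
  have "ladd L (ladd L u z) (lneg L u) = ladd L (ladd L z u) (lneg L u)" using u z M.a_comm by simp
  also have "\<dots> = ladd L z (ladd L u (lneg L u))" using u z M.a_assoc by simp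
  also have "\<dots> = z" using u z M.a_neg M.a_zero by simp
  finally show ?thesis .
qed

lemma sub_cancel3: assumes u: "u \<in> CL" and v: "v \<in> CL"
  shows "ladd L u (lneg L (ladd L u (lneg L v))) = v"
proof -
  have "lneg L (ladd L u (lneg L v)) = ladd L (lneg L u) v" using u v M.neg_add M.neg_neg by simp
  then have "ladd L u (lneg L (ladd L u (lneg L v))) = ladd L u (ladd L (lneg L u) v)" by simp
  also have "\<dots> = ladd L (ladd L u (lneg L u)) v" using u v M.a_assoc by simp
  also have "\<dots> = v" using u v M.a_neg M.zero_add by simp
  finally show ?thesis .
qed

lemma coset_eq_iff: assumes u: "u \<in> CL" and v: "v \<in> CL"
  shows "coset L u = coset L v \<longleftrightarrow> ladd L u (lneg L v) \<in> Z"
proof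
  assume "coset L u = coset L v"
  then have "u \<in> coset L v" using coset_self[OF u] by simp
  then obtain z where z: "z \<in> Z" "u = ladd L v z" by (auto simp: coset_def)
  then have "ladd L u (lneg L v) = z" using sub_cancel2[OF v Z_C[OF z(1)]] by simp
  then show "ladd L u (lneg L v) \<in> Z" using z by simp
next
  assume d: "ladd L u (lneg L v) \<in> Z"
  define d' where "d' = ladd L u (lneg L v)"
  have dC: "d' \<in> CL" "d' \<in> Z" using d u v by (simp_all add: d'_def)
  have uv: "u = ladd L v d'" using sub_cancel1[OF u v] by (simp add: d'_def)
  have vu: "v = ladd L u (lneg L d')" using sub_cancel3[OF u v] by (simp add: d'_def)
  show "coset L u = coset L v"
  proof (intro equalityI subsetI)
    fix x assume "x \<in> coset L u"
    then obtain z where z: "z \<in> Z" "x = ladd L u z" by (auto simp: coset_def)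
    then have "x = ladd L v (ladd L d' z)" using uv v dC Z_C[OF z(1)] M.a_assoc by simp
    then show "x \<in> coset L v" using z dC Z_add by (auto simp: coset_def)
  next
    fix x assume "x \<in> coset L v"
    then obtain z where z: "z \<in> Z" "x = ladd L v z" by (auto simp: coset_def)
    then have "x = ladd L u (ladd L (lneg L d') z)" using vu u dC Z_C[OF z(1)] M.a_assoc by simp
    then show "x \<in> coset L u" using z dC Z_add Z_neg by (auto simp: coset_def)
  qed
qed

lemma quot_carrier: "lcarrier (quot_center L) = coset L ` CL"
  by (simp add: quot_center_def Let_def coset_def)

end

context qsetup
begin

definition cls :: "'a \<times> ('a xgen, 'r) fterm \<times> ('r \<times> 'a) list \<Rightarrow> ('a list \<Rightarrow> 'r) set" where
  "cls a = enc ` {b. valid q g b \<and> req q g b a}"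

definition rp :: "('a list \<Rightarrow> 'r) set \<Rightarrow> 'a \<times> ('a xgen, 'r) fterm \<times> ('r \<times> 'a) list" where
  "rp X = (SOME a. valid q g a \<and> cls a = X)"

definition mm :: "(('a list \<Rightarrow> 'r) set, 'r) lie_alg" where
  "mm = \<lparr> lcarrier = cls ` {a. valid q g a},
          ladd = (\<lambda>X Y. cls (ad g (rp X) (rp Y))),
          lzero = cls (zr g),
          lneg = (\<lambda>X. cls (ng g (rp X))),
          lsmul = (\<lambda>r X. cls (sc g r (rp X))),
          lbr = (\<lambda>X Y. cls (bk g (rp X) (rp Y))) \<rparr>"

lemma enc_eq: "enc c = enc a \<Longrightarrow> c = a"
  by (rule injD[OF enc_inj])

lemma enc_in_cls: assumes "valid q g a" shows "enc a \<in> cls a"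
  unfolding cls_def using assms req_refl[of a] by (intro imageI) simp

lemma cls_eq: assumes "valid q g a" "valid q g b" shows "cls a = cls b \<longleftrightarrow> req q g a b"
proof
  assume r: "req q g a b"
  have "req q g c a \<longleftrightarrow> req q g c b" for c
    using r req_trans[of c a b] req_trans[of c b a] req_sym[of a b] by auto
  then have "{c. valid q g c \<and> req q g c a} = {c. valid q g c \<and> req q g c b}" by auto
  then show "cls a = cls b" unfolding cls_def by (rule arg_cong)
next
  assume "cls a = cls b"
  then have "enc a \<in> cls b" using enc_in_cls[OF assms(1)] by simp
  then obtain c where c: "c \<in> {c. valid q g c \<and> req q g c b}" "enc a = enc c"
    unfolding cls_def by (rule imageE)
  then have "c = a" using enc_eq by metis
  then show "req q g a b" using c by simp
qed

lemma rp_cls: assumes "valid q g a" shows "valid q g (rp (cls a))" "req q g (rp (cls a)) a"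
proof -
  have "valid q g (rp (cls a)) \<and> cls (rp (cls a)) = cls a"
    unfolding rp_def by (rule someI[of _ a]) (use assms in simp)
  then show "valid q g (rp (cls a))" "req q g (rp (cls a)) a" using cls_eq[of "rp (cls a)" a] assms by simp_all
qed

lemma mm_carrier: "X \<in> lcarrier mm \<longleftrightarrow> (\<exists>a. valid q g a \<and> X = cls a)"
  by (auto simp: mm_def simp del: valid.simps)

lemma mm_zero: "lzero mm = cls (zr g)" by (simp add: mm_def)

lemma mm_add: assumes "valid q g a" "valid q g b" shows "ladd mm (cls a) (cls b) = cls (ad g a b)"
proof -
  have "ladd mm (cls a) (cls b) = cls (ad g (rp (cls a)) (rp (cls b)))" by (simp add: mm_def)
  also have "\<dots> = cls (ad g a b)"
    using assms rp_cls[of a] rp_cls[of b] by (simp add: cls_eq valid_ad req_ad)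
  finally show ?thesis .
qed

lemma mm_neg: assumes "valid q g a" shows "lneg mm (cls a) = cls (ng g a)"
proof -
  have "lneg mm (cls a) = cls (ng g (rp (cls a)))" by (simp add: mm_def)
  also have "\<dots> = cls (ng g a)"
    using assms rp_cls[of a] by (simp add: cls_eq valid_ng req_ng)
  finally show ?thesis .
qed

lemma mm_sm: assumes "valid q g a" shows "lsmul mm r (cls a) = cls (sc g r a)"
proof -
  have "lsmul mm r (cls a) = cls (sc g r (rp (cls a)))" by (simp add: mm_def)
  also have "\<dots> = cls (sc g r a)"
    using assms rp_cls[of a] by (simp add: cls_eq valid_sc req_sc)
  finally show ?thesis .
qed

lemma mm_br: assumes "valid q g a" "valid q g b" shows "lbr mm (cls a) (cls b) = cls (bk g a b)"
proof -
  have "lbr mm (cls a) (cls b) = cls (bk g (rp (cls a)) (rp (cls b)))" by (simp add: mm_def)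
  also have "bk g (rp (cls a)) (rp (cls b)) = bk g a b"
    using bk_req[OF rp_cls(2)[OF assms(1)] rp_cls(2)[OF assms(2)]] .
  finally show ?thesis .
qed

lemma mm_ball: "(\<forall>X\<in>lcarrier mm. P X) \<longleftrightarrow> (\<forall>a. valid q g a \<longrightarrow> P (cls a))"
proof
  assume h: "\<forall>X\<in>lcarrier mm. P X"
  show "\<forall>a. valid q g a \<longrightarrow> P (cls a)"
  proof (intro allI impI)
    fix a assume "valid q g a"
    then have "cls a \<in> lcarrier mm" using mm_carrier by blast
    then show "P (cls a)" using h by blast
  qed
qed (auto simp: mm_carrier simp del: valid.simps)

lemmas mm_ops = mm_add mm_neg mm_sm mm_br mm_zero

lemma mm_carrierE: assumes "X \<in> lcarrier mm" obtains a where "valid q g a" "X = cls a"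
  using assms mm_carrier by blast

lemma cls_in: "valid q g a \<Longrightarrow> cls a \<in> lcarrier mm"
  using mm_carrier by blast

lemma lie_algebra_mm: "lie_algebra mm"
  unfolding lie_algebra_def Let_def
  apply (intro conjI allI impI ballI; (elim mm_carrierE)?)
  apply (simp_all del: valid.simps req.simps
      add: cls_in mm_ops valid_ad valid_ng valid_sc valid_bk valid_zr cls_eq
       rep_assoc rep_comm rep_zero rep_neg rep_sm_add rep_add_sm rep_sm_sm rep_one
       rep_br_addl rep_br_addr rep_br_sml rep_br_smr rep_br_self rep_jac)
  done

end

context qsetup
begin

lemma lsetup_mm: "lsetup mm"
  by (unfold_locales) (rule lie_algebra_mm)

lemma fst_ops: "fst (ad g a b) = ladd g (fst a) (fst b)" "fst (ng g a) = lneg g (fst a)"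
  "fst (sc g r a) = lsmul g r (fst a)" "fst (bk g a b) = lbr g (fst a) (fst b)" "fst (zr g) = lzero g"
  "fst (ur y) = y"
  by (cases a rule: prod_cases3, cases b rule: prod_cases3, simp_all add: zr_def ur_def)+

lemma valid_fst: "valid q g a \<Longrightarrow> fst a \<in> lcarrier g"
  by (cases a rule: prod_cases3) simp

lemma center_fst_zero: assumes v: "valid q g a" and c: "cls a \<in> lie_center mm"
  and tf: "q_torsion_free q TYPE('r)" and ZE: "ext_center_q q g = {lzero g}"
  shows "fst a = lzero g"
proof -
  have "req q g (bk g a b) (zr g)" if b: "valid q g b" for b
  proof -
    have "cls b \<in> lcarrier mm" using b cls_in by simp
    then have "lbr mm (cls a) (cls b) = lzero mm" using c by (simp add: lie_center_def)
    then have "cls (bk g a b) = cls (zr g)" using v b by (simp add: mm_br mm_zero)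
    then show ?thesis using cls_eq[OF valid_bk[OF v b] valid_zr] by simp
  qed
  then have "fst a \<in> ext_center_q q g" using cent2[OF tf v] by blast
  then show ?thesis using ZE by simp
qed

lemma fst_zero_center: assumes v: "valid q g a" and z: "fst a = lzero g"
  shows "cls a \<in> lie_center mm"
proof -
  have "lbr mm (cls a) Y = lzero mm" if Y: "Y \<in> lcarrier mm" for Y
  proof -
    obtain b where b: "valid q g b" "Y = cls b" using Y by (rule mm_carrierE)
    have "lbr mm (cls a) Y = cls (bk g a b)" using v b by (simp add: mm_br)
    also have "\<dots> = cls (zr g)" using cls_eq[OF valid_bk[OF v b(1)] valid_zr] cent1[OF v z b(1)] by simp
    finally show ?thesis by (simp add: mm_zero)
  qed
  then show ?thesis using cls_in[OF v] by (simp add: lie_center_def)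
qed

lemma center_q: assumes tf: "q_torsion_free q TYPE('r)" and ZE: "ext_center_q q g = {lzero g}"
  shows "lie_center mm = lie_center_q q mm"
proof (intro equalityI subsetI)
  fix X assume X: "X \<in> lie_center mm"
  then have "X \<in> lcarrier mm" by (simp add: lie_center_def)
  then obtain a where a: "valid q g a" "X = cls a" by (rule mm_carrierE)
  then have z: "fst a = lzero g" using center_fst_zero[OF a(1) _ tf ZE] X by simp
  have "lsmul mm (of_nat q) X = cls (sc g (of_nat q) a)" using a by (simp add: mm_sm)
  also have "\<dots> = cls (zr g)" using cls_eq[OF valid_sc[OF a(1)] valid_zr] cent3[OF a(1) z] by simp
  finally show "X \<in> lie_center_q q mm" using X by (simp add: lie_center_q_def mm_zero)
qed (simp add: lie_center_q_def)

lemma coset_fst: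
  assumes tf: "q_torsion_free q TYPE('r)" and ZE: "ext_center_q q g = {lzero g}"
    and u: "valid q g u" and v: "valid q g v"
  shows "coset mm (cls u) = coset mm (cls v) \<longleftrightarrow> fst u = fst v"
proof -
  interpret Q: lsetup mm by (rule lsetup_mm)
  have d: "ladd mm (cls u) (lneg mm (cls v)) = cls (ad g u (ng g v))"
    using u v by (simp add: mm_add mm_neg valid_ng)
  have vd: "valid q g (ad g u (ng g v))" using u v by (simp add: valid_ad valid_ng)
  have fd: "fst (ad g u (ng g v)) = ladd g (fst u) (lneg g (fst v))" by (simp add: fst_ops)
  have s1: "coset mm (cls u) = coset mm (cls v) \<longleftrightarrow> cls (ad g u (ng g v)) \<in> lie_center mm"
    using Q.coset_eq_iff[OF cls_in[OF u] cls_in[OF v]] unfolding d .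
  have s2: "cls (ad g u (ng g v)) \<in> lie_center mm \<longleftrightarrow> fst (ad g u (ng g v)) = lzero g"
    using center_fst_zero[OF vd _ tf ZE] fst_zero_center[OF vd] by blast
  have s3: "ladd g (fst u) (lneg g (fst v)) = lzero g \<longleftrightarrow> fst u = fst v"
  proof
    assume "ladd g (fst u) (lneg g (fst v)) = lzero g"
    then show "fst u = fst v" by (rule G.sub_zero_eq[OF valid_fst[OF u] valid_fst[OF v]])
  next
    assume "fst u = fst v"
    then show "ladd g (fst u) (lneg g (fst v)) = lzero g" using G.a_neg[OF valid_fst[OF v]] by simp
  qed
  show ?thesis using s1 s2 s3 fd by simp
qed

definition fiso :: "'a \<Rightarrow> ('a list \<Rightarrow> 'r) set set" where
  "fiso y = coset mm (cls (ur y))"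

lemma iso_mm: assumes tf: "q_torsion_free q TYPE('r)" and ZE: "ext_center_q q g = {lzero g}"
  shows "lie_iso fiso g (quot_center mm)"
proof -
  interpret Q: lsetup mm by (rule lsetup_mm)
  note cf = coset_fst[OF tf ZE]
  have vu: "valid q g (ur y)" if "y \<in> lcarrier g" for y using valid_ur that .
  have hom: "lie_hom fiso g (quot_center mm)"
    unfolding lie_hom_def
  proof (intro conjI ballI allI)
    fix x assume x: "x \<in> lcarrier g"
    show "fiso x \<in> lcarrier (quot_center mm)"
      using x vu cls_in by (simp add: fiso_def Q.quot_carrier)
  next
    fix x y assume x: "x \<in> lcarrier g" and y: "y \<in> lcarrier g"
    have "ladd (quot_center mm) (fiso x) (fiso y) = coset mm (cls (ad g (ur x) (ur y)))"
      using x y vu cls_in by (simp add: fiso_def Q.quot_add mm_add)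
    also have "\<dots> = fiso (ladd g x y)"
      unfolding fiso_def using x y vu valid_ad cf by (simp add: fst_ops)
    finally show "fiso (ladd g x y) = ladd (quot_center mm) (fiso x) (fiso y)" by simp
  next
    fix r x assume x: "x \<in> lcarrier g"
    have "lsmul (quot_center mm) r (fiso x) = coset mm (cls (sc g r (ur x)))"
      using x vu cls_in by (simp add: fiso_def Q.quot_sm mm_sm)
    also have "\<dots> = fiso (lsmul g r x)"
      unfolding fiso_def using x vu valid_sc cf by (simp add: fst_ops)
    finally show "fiso (lsmul g r x) = lsmul (quot_center mm) r (fiso x)" by simp
  next
    fix x y assume x: "x \<in> lcarrier g" and y: "y \<in> lcarrier g"
    have "lbr (quot_center mm) (fiso x) (fiso y) = coset mm (cls (bk g (ur x) (ur y)))"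
      using x y vu cls_in by (simp add: fiso_def Q.quot_br mm_br)
    also have "\<dots> = fiso (lbr g x y)"
      unfolding fiso_def using x y vu valid_bk cf by (simp add: fst_ops)
    finally show "fiso (lbr g x y) = lbr (quot_center mm) (fiso x) (fiso y)" by simp
  qed
  have inj: "inj_on fiso (lcarrier g)"
  proof (rule inj_onI)
    fix x y assume x: "x \<in> lcarrier g" and y: "y \<in> lcarrier g" and e: "fiso x = fiso y"
    then show "x = y" using cf[OF vu[OF x] vu[OF y]] by (simp add: fiso_def fst_ops)
  qed
  have img: "fiso ` lcarrier g = lcarrier (quot_center mm)"
  proof (intro equalityI subsetI)
    fix X assume "X \<in> fiso ` lcarrier g"
    then show "X \<in> lcarrier (quot_center mm)" using hom by (auto simp: lie_hom_def)
  next
    fix X assume "X \<in> lcarrier (quot_center mm)"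
    then obtain Y where Y: "Y \<in> lcarrier mm" "X = coset mm Y" by (auto simp: Q.quot_carrier)
    then obtain a where a: "valid q g a" "Y = cls a" by (elim mm_carrierE)
    have "X = fiso (fst a)"
      unfolding fiso_def Y a using cf[OF a(1) vu[OF valid_fst[OF a(1)]]] by (simp add: fst_ops)
    then show "X \<in> fiso ` lcarrier g" using valid_fst[OF a(1)] by blast
  qed
  show ?thesis unfolding lie_iso_def bij_betw_def using hom inj img by blast
qed

lemma capable: assumes tf: "q_torsion_free q TYPE('r)" and ZE: "ext_center_q q g = {lzero g}"
  shows "strongly_q_capable q g TYPE(('a list \<Rightarrow> 'r) set)"
  unfolding strongly_q_capable_def
  by (intro exI[of _ mm] exI[of _ fiso] conjI lie_algebra_mm center_q[OF tf ZE] iso_mm[OF tf ZE])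

end

context lsetup
begin

lemma jac_neg: assumes a: "a \<in> CL" and b: "b \<in> CL" and c: "c \<in> CL"
  shows "lbr L a (lbr L b c) = ladd L (lneg L (lbr L b (lbr L c a))) (lneg L (lbr L c (lbr L a b)))"
proof -
  have J: "ladd L (lbr L a (lbr L b c)) (ladd L (lbr L b (lbr L c a)) (lbr L c (lbr L a b))) = lzero L"
    using M.b_jac a b c by simp
  then have "ladd L (ladd L (lbr L b (lbr L c a)) (lbr L c (lbr L a b))) (lbr L a (lbr L b c)) = lzero L"
    using M.a_comm[of "lbr L a (lbr L b c)" "ladd L (lbr L b (lbr L c a)) (lbr L c (lbr L a b))"] a b c by simp
  then have "lbr L a (lbr L b c) = lneg L (ladd L (lbr L b (lbr L c a)) (lbr L c (lbr L a b)))"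
    using M.neg_unique a b c by simp
  also have "\<dots> = ladd L (lneg L (lbr L b (lbr L c a))) (lneg L (lbr L c (lbr L a b)))"
    using M.neg_add a b c by simp
  finally show ?thesis .
qed

lemma jid3: assumes a: "a \<in> CL" and b: "b \<in> CL" and c: "c \<in> CL"
  shows "lbr L a (lbr L b c) = ladd L (lbr L (lbr L a b) c) (lbr L b (lbr L a c))"
proof -
  have e1: "lbr L (lbr L a b) c = lneg L (lbr L c (lbr L a b))" using M.br_anti[of c "lbr L a b"] a b c by simp
  have e2: "lbr L a c = lneg L (lbr L c a)" using M.br_anti[of c a] a c by simp
  have e3: "lbr L b (lbr L a c) = lneg L (lbr L b (lbr L c a))" unfolding e2 using M.br_negr a b c by simp
  show ?thesis unfolding e1 e3 jac_neg[OF a b c]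
    using M.a_comm a b c by simp
qed

lemma jid1: assumes a: "a \<in> CL" and b: "b \<in> CL" and c: "c \<in> CL"
  shows "lbr L (lbr L a b) c = ladd L (lbr L a (lbr L b c)) (lneg L (lbr L b (lbr L a c)))"
proof -
  have "lbr L a (lbr L b c) = ladd L (lbr L (lbr L a b) c) (lbr L b (lbr L a c))" by (rule jid3[OF a b c])
  then have "ladd L (lbr L a (lbr L b c)) (lneg L (lbr L b (lbr L a c)))
      = ladd L (ladd L (lbr L (lbr L a b) c) (lbr L b (lbr L a c))) (lneg L (lbr L b (lbr L a c)))" by simp
  also have "\<dots> = ladd L (ladd L (lbr L b (lbr L a c)) (lbr L (lbr L a b) c)) (lneg L (lbr L b (lbr L a c)))"
    using M.a_comm[of "lbr L (lbr L a b) c" "lbr L b (lbr L a c)"] a b c by simp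
  also have "\<dots> = lbr L (lbr L a b) c" using sub_cancel2 a b c by simp
  finally show ?thesis by simp
qed

lemma jid2: assumes a: "a \<in> CL" and b: "b \<in> CL" and c: "c \<in> CL"
  shows "lbr L a (lbr L b c) = ladd L (lbr L (lbr L c a) b) (lneg L (lbr L (lbr L b a) c))"
proof -
  have e1: "lbr L (lbr L c a) b = lneg L (lbr L b (lbr L c a))" using M.br_anti[of b "lbr L c a"] a b c by simp
  have e2: "lbr L b a = lneg L (lbr L a b)" using M.br_anti[of a b] a b by simp
  have e3: "lbr L (lbr L b a) c = lneg L (lbr L c (lbr L b a))" using M.br_anti[of c "lbr L b a"] a b c by simp
  have e4: "lbr L c (lbr L b a) = lneg L (lbr L c (lbr L a b))" unfolding e2 using M.br_negr a b c by simp
  have e5: "lneg L (lbr L (lbr L b a) c) = lneg L (lbr L c (lbr L a b))"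
    unfolding e3 e4 using M.neg_neg a b c by simp
  show ?thesis unfolding e1 e5 jac_neg[OF a b c] ..
qed

end

fun interp :: "nat \<Rightarrow> ('m, 'r::comm_ring_1) lie_alg \<Rightarrow> ('a \<Rightarrow> 'm) \<Rightarrow> ('a xgen, 'r) fterm \<Rightarrow> 'm" where
  "interp q m l (FGen (XWedge h k)) = lbr m (l h) (l k)"
| "interp q m l (FGen (XBrace h)) = lsmul m (of_nat q) (l h)"
| "interp q m l FZero = lzero m"
| "interp q m l (FAdd a b) = ladd m (interp q m l a) (interp q m l b)"
| "interp q m l (FNeg a) = lneg m (interp q m l a)"
| "interp q m l (FSmul r a) = lsmul m r (interp q m l a)"
| "interp q m l (FBr a b) = lbr m (interp q m l a) (interp q m l b)"

locale dir1 = qsetup q g for q and g :: "('a, 'r::comm_ring_1) lie_alg" +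
  fixes m :: "('m, 'r) lie_alg" and f :: "'a \<Rightarrow> 'm set"
  assumes LAM: "lie_algebra m" and ZQ: "lie_center m = lie_center_q q m"
    and ISO: "lie_iso f g (quot_center m)"
begin

sublocale Q: lsetup m by (unfold_locales) (rule LAM)

definition ell :: "'a \<Rightarrow> 'm" where
  "ell y = (if y \<in> lcarrier g then (SOME u. u \<in> lcarrier m \<and> f y = coset m u) else lzero m)"

lemma hom: "lie_hom f g (quot_center m)" using ISO by (simp add: lie_iso_def)

lemma ell: assumes "y \<in> lcarrier g" shows "ell y \<in> lcarrier m" "f y = coset m (ell y)"
proof -
  have "f y \<in> lcarrier (quot_center m)" using hom assms by (simp add: lie_hom_def)
  then obtain u where u: "u \<in> lcarrier m \<and> f y = coset m u" by (auto simp: Q.quot_carrier)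
  have e: "ell y = (SOME u. u \<in> lcarrier m \<and> f y = coset m u)" using assms by (simp add: ell_def)
  have "ell y \<in> lcarrier m \<and> f y = coset m (ell y)"
    unfolding e by (rule someI[of _ u]) (rule u)
  then show "ell y \<in> lcarrier m" "f y = coset m (ell y)" by simp_all
qed

lemma ell_C[simp]: "ell y \<in> lcarrier m"
  using ell(1)[of y] by (cases "y \<in> lcarrier g") (auto simp: ell_def)

lemma coset_same: assumes "u \<in> lcarrier m" "v \<in> lcarrier m" "coset m u = coset m v"
  shows "\<exists>z\<in>lie_center m. u = ladd m v z"
  using Q.coset_self[OF assms(1)] assms(3) Q.coset_mem[OF assms(2)] by simp

lemma ell_add: assumes "x \<in> lcarrier g" "y \<in> lcarrier g"
  shows "\<exists>z\<in>lie_center m. ell (ladd g x y) = ladd m (ladd m (ell x) (ell y)) z"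
proof -
  have "coset m (ell (ladd g x y)) = f (ladd g x y)" using ell assms by simp
  also have "\<dots> = ladd (quot_center m) (f x) (f y)" using hom assms by (simp add: lie_hom_def)
  also have "\<dots> = coset m (ladd m (ell x) (ell y))" using assms ell by (simp add: Q.quot_add)
  finally show ?thesis by (intro coset_same) simp_all
qed

lemma ell_sm: assumes "x \<in> lcarrier g"
  shows "\<exists>z\<in>lie_center m. ell (lsmul g r x) = ladd m (lsmul m r (ell x)) z"
proof -
  have "coset m (ell (lsmul g r x)) = f (lsmul g r x)" using ell assms by simp
  also have "\<dots> = lsmul (quot_center m) r (f x)" using hom assms by (simp add: lie_hom_def)
  also have "\<dots> = coset m (lsmul m r (ell x))" using assms ell by (simp add: Q.quot_sm)
  finally show ?thesis by (intro coset_same) simp_all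
qed

lemma ell_br: assumes "x \<in> lcarrier g" "y \<in> lcarrier g"
  shows "\<exists>z\<in>lie_center m. ell (lbr g x y) = ladd m (lbr m (ell x) (ell y)) z"
proof -
  have "coset m (ell (lbr g x y)) = f (lbr g x y)" using ell assms by simp
  also have "\<dots> = lbr (quot_center m) (f x) (f y)" using hom assms by (simp add: lie_hom_def)
  also have "\<dots> = coset m (lbr m (ell x) (ell y))" using assms ell by (simp add: Q.quot_br)
  finally show ?thesis by (intro coset_same) simp_all
qed

lemma Zq: assumes "z \<in> lie_center m" shows "lsmul m (of_nat q) z = lzero m"
proof -
  have "z \<in> lie_center_q q m" using assms ZQ by simp
  then show ?thesis unfolding lie_center_q_def by simp
qed

end

context dir1
begin

abbreviation Iv where "Iv \<equiv> interp q m ell"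

lemma Iv_C[simp]: "Iv t \<in> lcarrier m"
proof (induction t)
  case (FGen x) then show ?case by (cases x) simp_all
qed simp_all

lemma Zc: "z \<in> lie_center m \<Longrightarrow> z \<in> lcarrier m" by (rule Q.Z_C)

lemma sound: "qext_eq q g s t \<Longrightarrow> Iv s = Iv t"
proof (induction rule: qext_eq.induct)
  case (add_assoc x y z) then show ?case by (simp add: Q.M.a_assoc)
next
  case (add_comm x y) then show ?case by (simp add: Q.M.a_comm)
next
  case (add_zero x) then show ?case by (simp add: Q.M.a_zero)
next
  case (add_neg x) then show ?case by (simp add: Q.M.a_neg)
next
  case (smul_add r x y) then show ?case by (simp add: Q.M.s_add)
next
  case (add_smul r s x) then show ?case by (simp add: Q.M.s_distr)
next
  case (smul_smul r s x) then show ?case by (simp add: Q.M.s_ss)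
next
  case (one_smul x) then show ?case by (simp add: Q.M.s_one)
next
  case (br_add_left x y z) then show ?case by (simp add: Q.M.b_addl)
next
  case (br_add_right x y z) then show ?case by (simp add: Q.M.b_addr)
next
  case (br_smul_left r x y) then show ?case by (simp add: Q.M.b_sml)
next
  case (br_smul_right x r y) then show ?case by (simp add: Q.M.b_smr)
next
  case (br_self x) then show ?case by (simp add: Q.M.b_self)
next
  case (jacobi x y z) then show ?case by (simp add: Q.M.b_jac)
next
  case (rel1a h k r)
  obtain z where z: "z \<in> lie_center m" "ell (lsmul g r h) = ladd m (lsmul m r (ell h)) z"
    using ell_sm[OF rel1a(1)] by blast
  show ?case using z Zc[OF z(1)]
    by (simp add: Q.M.b_addl Q.M.b_sml Q.Z_brl Q.M.a_zero)
next
  case (rel1b h k r)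
  obtain z where z: "z \<in> lie_center m" "ell (lsmul g r k) = ladd m (lsmul m r (ell k)) z"
    using ell_sm[OF rel1b(2)] by blast
  show ?case using z Zc[OF z(1)]
    by (simp add: Q.M.b_addr Q.M.b_smr Q.Z_brr Q.M.a_zero)
next
  case (rel2 h h' k)
  obtain z where z: "z \<in> lie_center m" "ell (ladd g h h') = ladd m (ladd m (ell h) (ell h')) z"
    using ell_add[OF rel2(1,2)] by blast
  show ?case using z Zc[OF z(1)]
    by (simp add: Q.M.b_addl Q.Z_brl Q.M.a_zero)
next
  case (rel3 h k k')
  obtain z where z: "z \<in> lie_center m" "ell (ladd g k k') = ladd m (ladd m (ell k) (ell k')) z"
    using ell_add[OF rel3(2,3)] by blast
  show ?case using z Zc[OF z(1)]
    by (simp add: Q.M.b_addr Q.Z_brr Q.M.a_zero)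
next
  case (rel4 h h' k)
  obtain z1 where z1: "z1 \<in> lie_center m" "ell (lbr g h h') = ladd m (lbr m (ell h) (ell h')) z1"
    using ell_br[OF rel4(1,2)] by blast
  obtain z2 where z2: "z2 \<in> lie_center m" "ell (lbr g h' k) = ladd m (lbr m (ell h') (ell k)) z2"
    using ell_br[OF rel4(2,3)] by blast
  obtain z3 where z3: "z3 \<in> lie_center m" "ell (lbr g h k) = ladd m (lbr m (ell h) (ell k)) z3"
    using ell_br[OF rel4(1,3)] by blast
  show ?case using z1 z2 z3 Zc[OF z1(1)] Zc[OF z2(1)] Zc[OF z3(1)]
    by (simp add: Q.M.b_addl Q.M.b_addr Q.Z_brl Q.Z_brr Q.M.a_zero Q.jid1)
next
  case (rel5 h k k')
  obtain z1 where z1: "z1 \<in> lie_center m" "ell (lbr g k k') = ladd m (lbr m (ell k) (ell k')) z1"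
    using ell_br[OF rel5(2,3)] by blast
  obtain z2 where z2: "z2 \<in> lie_center m" "ell (lbr g k' h) = ladd m (lbr m (ell k') (ell h)) z2"
    using ell_br[OF rel5(3,1)] by blast
  obtain z3 where z3: "z3 \<in> lie_center m" "ell (lbr g k h) = ladd m (lbr m (ell k) (ell h)) z3"
    using ell_br[OF rel5(2,1)] by blast
  show ?case using z1 z2 z3 Zc[OF z1(1)] Zc[OF z2(1)] Zc[OF z3(1)]
    by (simp add: Q.M.b_addl Q.M.b_addr Q.Z_brl Q.Z_brr Q.M.a_zero Q.jid2)
next
  case (rel6 h k h' k')
  obtain z1 where z1: "z1 \<in> lie_center m" "ell (lbr g h k) = ladd m (lbr m (ell h) (ell k)) z1"
    using ell_br[OF rel6(1,2)] by blast
  obtain z2 where z2: "z2 \<in> lie_center m" "ell (lbr g h' k') = ladd m (lbr m (ell h') (ell k')) z2"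
    using ell_br[OF rel6(3,4)] by blast
  show ?case using z1 z2 Zc[OF z1(1)] Zc[OF z2(1)]
    by (simp add: Q.M.b_addl Q.M.b_addr Q.Z_brl Q.Z_brr Q.M.a_zero)
next
  case (rel7 h h' k)
  have qh: "lsmul g (of_nat q) h' \<in> lcarrier g" using rel7 by simp
  obtain z0 where z0: "z0 \<in> lie_center m" "ell (lsmul g (of_nat q) h') = ladd m (lsmul m (of_nat q) (ell h')) z0"
    using ell_sm[OF rel7(2)] by blast
  obtain z1 where z1: "z1 \<in> lie_center m"
    "ell (lbr g (lsmul g (of_nat q) h') h) = ladd m (lbr m (ell (lsmul g (of_nat q) h')) (ell h)) z1"
    using ell_br[OF qh rel7(1)] by blast
  obtain z2 where z2: "z2 \<in> lie_center m"
    "ell (lbr g (lsmul g (of_nat q) h') k) = ladd m (lbr m (ell (lsmul g (of_nat q) h')) (ell k)) z2"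
    using ell_br[OF qh rel7(3)] by blast
  have "Iv (FAdd (W (lbr g (lsmul g (of_nat q) h') h) k) (W h (lbr g (lsmul g (of_nat q) h') k)))
     = ladd m (lbr m (lbr m (lsmul m (of_nat q) (ell h')) (ell h)) (ell k))
              (lbr m (ell h) (lbr m (lsmul m (of_nat q) (ell h')) (ell k)))"
    using z0 z1 z2 Zc[OF z0(1)] Zc[OF z1(1)] Zc[OF z2(1)]
    by (simp add: Q.M.b_addl Q.M.b_addr Q.Z_brl Q.Z_brr Q.M.a_zero)
  also have "\<dots> = lbr m (lsmul m (of_nat q) (ell h')) (lbr m (ell h) (ell k))"
    by (rule Q.jid3[symmetric]) simp_all
  finally show ?case by simp
next
  case (rel8 h h' r r')
  have c: "lsmul g r h \<in> lcarrier g" "lsmul g r' h' \<in> lcarrier g" using rel8 by simp_all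
  obtain z1 where z1: "z1 \<in> lie_center m"
    "ell (ladd g (lsmul g r h) (lsmul g r' h')) = ladd m (ladd m (ell (lsmul g r h)) (ell (lsmul g r' h'))) z1"
    using ell_add[OF c] by blast
  obtain z2 where z2: "z2 \<in> lie_center m" "ell (lsmul g r h) = ladd m (lsmul m r (ell h)) z2"
    using ell_sm[OF rel8(1)] by blast
  obtain z3 where z3: "z3 \<in> lie_center m" "ell (lsmul g r' h') = ladd m (lsmul m r' (ell h')) z3"
    using ell_sm[OF rel8(2)] by blast
  show ?case using z1 z2 z3 Zc[OF z1(1)] Zc[OF z2(1)] Zc[OF z3(1)] Zq[OF z1(1)] Zq[OF z2(1)] Zq[OF z3(1)]
    by (simp add: Q.M.s_add Q.M.s_ss Q.M.a_zero mult_ac)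
next
  case (rel9 h h')
  obtain z1 where z1: "z1 \<in> lie_center m" "ell (lsmul g (of_nat q) h) = ladd m (lsmul m (of_nat q) (ell h)) z1"
    using ell_sm[OF rel9(1)] by blast
  obtain z2 where z2: "z2 \<in> lie_center m" "ell (lsmul g (of_nat q) h') = ladd m (lsmul m (of_nat q) (ell h')) z2"
    using ell_sm[OF rel9(2)] by blast
  show ?case using z1 z2 Zc[OF z1(1)] Zc[OF z2(1)]
    by (simp add: Q.M.b_addl Q.M.b_addr Q.Z_brl Q.Z_brr Q.M.a_zero)
next
  case (rel10 h k)
  obtain z where z: "z \<in> lie_center m" "ell (lbr g h k) = ladd m (lbr m (ell h) (ell k)) z"
    using ell_br[OF rel10(1,2)] by blast
  show ?case using z Zc[OF z(1)] Zq[OF z(1)]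
    by (simp add: Q.M.s_add Q.M.s_ss Q.M.a_zero)
next
  case (rel11 h) then show ?case by (simp add: Q.M.b_self)
next
  case (rel_q0 h) then show ?case by (simp add: Q.M.zero_sm)
qed simp_all

lemma ext_zero: "ext_center_q q g = {lzero g}"
proof (intro equalityI subsetI)
  fix x assume "x \<in> {lzero g}"
  then show "x \<in> ext_center_q q g" using wedge_zero_l by (simp add: ext_center_q_def)
next
  fix x assume x: "x \<in> ext_center_q q g"
  then have xG: "x \<in> lcarrier g" and w: "\<And>y. y \<in> lcarrier g \<Longrightarrow> W x y \<approx> FZero"
    by (auto simp: ext_center_q_def)
  have bij: "bij_betw f (lcarrier g) (lcarrier (quot_center m))" using ISO by (simp add: lie_iso_def)
  have brz: "lbr m (ell x) u = lzero m" if u: "u \<in> lcarrier m" for u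
  proof -
    have "coset m u \<in> lcarrier (quot_center m)" using u by (simp add: Q.quot_carrier)
    then obtain y where y: "y \<in> lcarrier g" "f y = coset m u"
      using bij unfolding bij_betw_def by (metis imageE)
    then have "coset m u = coset m (ell y)" using ell(2) by simp
    then obtain z where z: "z \<in> lie_center m" "u = ladd m (ell y) z"
      using coset_same[OF u ell_C] by blast
    have "lbr m (ell x) (ell y) = lzero m" using sound[OF w[OF y(1)]] by simp
    then show ?thesis using z Zc[OF z(1)] by (simp add: Q.M.b_addr Q.Z_brr Q.M.a_zero)
  qed
  then have ex: "ell x \<in> lie_center m" by (simp add: lie_center_def)
  have "f x = coset m (lzero m)"
    using ell(2)[OF xG] Q.coset_eq_iff[OF ell_C Q.M.C_zero] ex by (simp add: Q.M.neg_zero Q.M.a_zero)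
  moreover have "f (lzero g) = coset m (lzero m)"
  proof -
    have "f (lzero g) = f (lsmul g 0 x)" using xG by (simp add: G.zero_sm)
    also have "\<dots> = lsmul (quot_center m) 0 (f x)" using hom xG by (simp add: lie_hom_def)
    also have "\<dots> = coset m (lzero m)" using ell[OF xG] by (simp add: Q.quot_sm Q.M.zero_sm)
    finally show ?thesis .
  qed
  ultimately have "f x = f (lzero g)" by simp
  then show "x \<in> {lzero g}" using bij xG unfolding bij_betw_def inj_on_def by simp
qed

end

theorem theorem6p8:
  fixes q :: nat
    and g :: "('a, 'r::comm_ring_1) lie_alg"
  assumes "q_torsion_free q TYPE('r)"
    and "lie_algebra g"
  shows "(strongly_q_capable q g TYPE('m) \<longrightarrow> ext_center_q q g = {lzero g})
       \<and> (ext_center_q q g = {lzero g} \<longrightarrow> strongly_q_capable q g TYPE(('a list \<Rightarrow> 'r) set))"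
proof -
  interpret qsetup q g by unfold_locales (rule assms(2))
  show ?thesis
  proof (intro conjI impI)
    assume "strongly_q_capable q g TYPE('m)"
    then obtain m :: "('m, 'r) lie_alg" and f where
      h: "lie_algebra m" "lie_center m = lie_center_q q m" "lie_iso f g (quot_center m)"
      unfolding strongly_q_capable_def by blast
    interpret dir1 q g m f by unfold_locales (rule h(1), rule h(2), rule h(3))
    show "ext_center_q q g = {lzero g}" by (rule ext_zero)
  next
    assume "ext_center_q q g = {lzero g}"
    then show "strongly_q_capable q g TYPE(('a list \<Rightarrow> 'r) set)" by (rule capable[OF assms(1)])
  qed
qed

end
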